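(* (1) Let $\mathcal C$ and $\mathcal D$ be connected $\Delta$-complexes labeled over a common $B(X,P)$ and let $f\colon\mathcal D\to\mathcal C$ be an immersion commuting with the labelings. If $v\in\mathcal D^{(0)}$ and $u=f(v)$, then $L(\mathcal D,v)\subseteq L(\mathcal C,u)$, and $L(\mathcal D,v)$ is a closed inverse submonoid of $L(\mathcal C,u)$. (2) Conversely, let $\mathcal C$ be a connected $\Delta$-complex labeled over $B(X,P)$, let $u\in\mathcal C^{(0)}$ and let $H$ be a closed inverse submonoid of $M(X,P)$ with $H\subseteq L(\mathcal C,u)$. Then there exist a connected $\Delta$-complex $\mathcal D_H$ labeled over $B(X,P)$, an immersion $f_H\colon\mathcal D_H\to\mathcal C$ commuting with the labelings, and a $0$-cell $v\in\mathcal D_H$ with $f_H(v)=u$ and $L(\mathcal D_H,v)=H$; moreover $(\mathcal D_H,f_H,v)$ is unique up to isomorphism (a label-preserving cellular homeomorphism commuting with characteristic maps, with the immersions and preserving the base vertex). (3) If $H,K$ are closed inverse submonoids of $M(X,P)$ with $H,K\subseteq L(\mathcal C,u)$, then there is a homeomorphism $h\colon\mathcal D_H\to\mathcal D_K$ carrying cells to cells, commuting with the distinguished characteristic maps and with $f_K\circ h=f_H$ (not required to preserve base vertices) if and only if $H$ and $K$ are conjugate in $L(\mathcal C,u)$.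
   Context: A $\Delta$-complex is a CW-complex in which each $k$-cell $c$ has a distinguished characteristic map $\sigma_c\colon\Delta^k\to\mathcal C$, $\Delta^k=[v_0,\dots,v_k]$ the standard simplex with ordered vertices, such that the restriction of $\sigma_c$ to each $(k-1)$-face (identified order-preservingly with $\Delta^{k-1}$) is the distinguished characteristic map of a $(k-1)$-cell. The root of $c$ is $\sigma_c(v_0)$; a $1$-cell $e$ is directed from $\sigma_e(v_0)$ to $\sigma_e(v_1)$. All complexes are finite-dimensional; $\mathcal C^{(0)}$ denotes the set of $0$-cells. An immersion is a continuous map $f$ that is a local homeomorphism onto its image and commutes with characteristic maps: each $k$-cell $d$ maps onto a $k$-cell and $f\circ\sigma_d=\sigma_{f(d)}$. $B(X,P)$ is a $\Delta$-complex with one $0$-cell, $1$-cells indexed by $X$, $k$-cells ($2\le k\le n$) indexed by $P_k$, index sets pairwise disjoint, $P=\bigcup P_k$. A complex $\mathcal C$ is labeled over $B(X,P)$ via an immersion $f_{\mathcal C}\colon\mathcal C\to B(X,P)$, and $\ell(c)$ is the index of $f_{\mathcal C}(c)$; an immersion $g\colon\mathcal D\to\mathcal C$ commutes with the labelings if $f_{\mathcal C}\circ g=f_{\mathcal D}$. Boundary labels: for a $k$-cell $c$ ($k\ge2$) with characteristic map $\sigma$, let $c_i$ be the $(k-1)$-cell whose characteristic map is $\sigma$ restricted to the face omitting $v_i$, and $e(c)=\sigma([v_0,v_1])$; $bl(c)=\ell(\sigma[v_0,v_1])\ell(\sigma[v_1,v_2])\ell(\sigma[v_0,v_2])^{-1}$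 if $k=2$, $bl(c)=\ell(c_k)\cdots\ell(c_1)\ell(e(c))\ell(c_0)\ell(e(c))^{-1}$ if $k\ge3$; $bl(\rho)$ is the boundary label of the cell of $B(X,P)$ labeled $\rho$. $M(X,P)$ is the inverse monoid presented by generators $X\cup P$ and relations $\rho^2=\rho$, $\rho=\rho\,bl(\rho)$ for $\rho\in P$. $M(X,P)$ acts on the right by partial injections on $\mathcal C^{(0)}$: $v\cdot x=w$ iff there is a $1$-cell labeled $x\in X$ from $v$ to $w$; $v\cdot x^{-1}=w$ iff there is one from $w$ to $v$; $v\cdot\rho=v$ iff $v$ is the root of a cell labeled $\rho\in P$ (undefined otherwise); this extends to a well-defined action of $M(X,P)$. The loop monoid is $L(\mathcal C,v)=\{m\in M(X,P): v\cdot m=v\}$. Natural partial order: $a\le b$ iff $a=eb$ for an idempotent $e$. For $N\subseteq M$, $N^\omega=\{m: m\ge n\text{ for some }n\in N\}$; $N$ is closed if $N=N^\omega$. Two closed inverse submonoids $H,K$ are conjugate in $L$ if there is $m\in L$ with $mHm^{-1}\subseteq K$ and $m^{-1}Km\subseteq H$. *)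

theory Defs
  imports Main
begin

text \<open>A Delta-complex is encoded by its cells of each dimension together with the face
operators: dface i c is the (k-1)-cell whose characteristic map is the restriction of the
characteristic map of the k-cell c to the face omitting v_i.\<close>

record 'c dcx =
  dcells :: "nat \<Rightarrow> 'c set"
  dface :: "nat \<Rightarrow> 'c \<Rightarrow> 'c"

definition dcomplex :: "'c dcx \<Rightarrow> bool" where
  "dcomplex C \<longleftrightarrow>
     (\<forall>k j. k \<noteq> j \<longrightarrow> dcells C k \<inter> dcells C j = {}) \<and>
     (\<forall>k c i. 1 \<le> k \<longrightarrow> c \<in> dcells C k \<longrightarrow> i \<le> k \<longrightarrow> dface C i c \<in> dcells C (k - 1)) \<and>
     (\<forall>k c i j. 2 \<le> k \<longrightarrow> c \<in> dcells C k \<longrightarrow> i < j \<longrightarrow> j \<le> k \<longrightarrow>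
         dface C i (dface C j c) = dface C (j - 1) (dface C i c)) \<and>
     (\<exists>n. \<forall>k>n. dcells C k = {})"

definition allcells :: "'c dcx \<Rightarrow> 'c set" where
  "allcells C = (\<Union>k. dcells C k)"

text \<open>vert C k j c: the 0-cell which is the image of vertex v_j of the k-cell c.\<close>
fun vert :: "'c dcx \<Rightarrow> nat \<Rightarrow> nat \<Rightarrow> 'c \<Rightarrow> 'c" where
  "vert C 0 j c = c"
| "vert C (Suc k) j c =
     (if j < Suc k then vert C k j (dface C (Suc k) c) else vert C k (j - 1) (dface C 0 c))"

definition root :: "'c dcx \<Rightarrow> nat \<Rightarrow> 'c \<Rightarrow> 'c" where
  "root C k c = vert C k 0 c"

text \<open>e(c) = sigma([v_0,v_1]) for a k-cell c (k >= 1).\<close>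
fun edge01 :: "'c dcx \<Rightarrow> nat \<Rightarrow> 'c \<Rightarrow> 'c" where
  "edge01 C k c = (if k \<le> 1 then c else edge01 C (k - 1) (dface C k c))"

text \<open>Connectedness (of the realization) = connectedness of the 1-skeleton.\<close>
definition dconnected :: "'c dcx \<Rightarrow> bool" where
  "dconnected C \<longleftrightarrow>
     (\<forall>u\<in>dcells C 0. \<forall>w\<in>dcells C 0.
        (\<lambda>a b. \<exists>e\<in>dcells C 1. (dface C 1 e = a \<and> dface C 0 e = b) \<or>
                               (dface C 1 e = b \<and> dface C 0 e = a))\<^sup>*\<^sup>* u w)"

text \<open>Immersion: cellular map sending k-cells onto k-cells, commuting with characteristic
maps (i.e. with face operators), and locally injective (injective on the open star of
every vertex).\<close>
definition immersion :: "'c dcx \<Rightarrow> 'd dcx \<Rightarrow> ('c \<Rightarrow> 'd) \<Rightarrow> bool" where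
  "immersion C D f \<longleftrightarrow>
     (\<forall>k. \<forall>c\<in>dcells C k. f c \<in> dcells D k) \<and>
     (\<forall>k. \<forall>c\<in>dcells C k. \<forall>i\<le>k. 1 \<le> k \<longrightarrow> f (dface C i c) = dface D i (f c)) \<and>
     (\<forall>k. \<forall>c1\<in>dcells C k. \<forall>c2\<in>dcells C k. \<forall>j\<le>k.
         vert C k j c1 = vert C k j c2 \<longrightarrow> f c1 = f c2 \<longrightarrow> c1 = c2)"

text \<open>Isomorphism of Delta-complexes: a cellular homeomorphism commuting with the
distinguished characteristic maps.\<close>
definition dc_iso :: "'c dcx \<Rightarrow> 'd dcx \<Rightarrow> ('c \<Rightarrow> 'd) \<Rightarrow> bool" where
  "dc_iso C D h \<longleftrightarrow> bij_betw h (allcells C) (allcells D) \<and>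
     (\<forall>k. \<forall>c\<in>dcells C k. h c \<in> dcells D k) \<and>
     (\<forall>k. \<forall>c\<in>dcells C k. \<forall>i\<le>k. 1 \<le> k \<longrightarrow> h (dface C i c) = dface D i (h c))"

text \<open>B(X,P) is a Delta-complex with exactly one 0-cell; its 1-cells are X and its k-cells
(k >= 2) are P_k; the cells of B are their own indices.\<close>
definition is_base :: "'l dcx \<Rightarrow> bool" where
  "is_base B \<longleftrightarrow> dcomplex B \<and> (\<exists>z. dcells B 0 = {z})"

definition Xset :: "'l dcx \<Rightarrow> 'l set" where
  "Xset B = dcells B 1"

definition Pset :: "'l dcx \<Rightarrow> 'l set" where
  "Pset B = (\<Union>k\<in>{2..}. dcells B k)"

definition labeled :: "'l dcx \<Rightarrow> 'c dcx \<Rightarrow> ('c \<Rightarrow> 'l) \<Rightarrow> bool" where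
  "labeled B C lab \<longleftrightarrow> dcomplex C \<and> immersion C B lab"

definition lab_immersion :: "'d dcx \<Rightarrow> ('d \<Rightarrow> 'l) \<Rightarrow> 'c dcx \<Rightarrow> ('c \<Rightarrow> 'l) \<Rightarrow> ('d \<Rightarrow> 'c) \<Rightarrow> bool" where
  "lab_immersion D labD C labC f \<longleftrightarrow> immersion D C f \<and>
     (\<forall>k. \<forall>d\<in>dcells D k. labC (f d) = labD d)"

text \<open>Words over X \<union> P and formal inverses; (a, True) stands for a^{-1}.\<close>
type_synonym 'l word = "('l \<times> bool) list"

definition words :: "'l dcx \<Rightarrow> 'l word set" where
  "words B = lists ((Xset B \<union> Pset B) \<times> UNIV)"

definition winv :: "'l word \<Rightarrow> 'l word" where
  "winv w = rev (map (\<lambda>(a, b). (a, \<not> b)) w)"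

definition bl :: "'l dcx \<Rightarrow> 'l \<Rightarrow> 'l word" where
  "bl B \<rho> = (let k = (THE k. \<rho> \<in> dcells B k) in
     if k = 2 then [(dface B 2 \<rho>, False), (dface B 0 \<rho>, False), (dface B 1 \<rho>, True)]
     else map (\<lambda>i. (dface B i \<rho>, False)) (rev [1..<Suc k]) @
          [(edge01 B k \<rho>, False), (dface B 0 \<rho>, False), (edge01 B k \<rho>, True)])"

text \<open>The congruence on words presenting M(X,P) as an inverse monoid: the Wagner
congruence (free inverse monoid) together with the relations rho^2 = rho and
rho = rho bl(rho).\<close>
inductive mcong :: "'l dcx \<Rightarrow> 'l word \<Rightarrow> 'l word \<Rightarrow> bool" for B where
  refl: "w \<in> words B \<Longrightarrow> mcong B w w"
| sym: "mcong B u v \<Longrightarrow> mcong B v u"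
| trans: "mcong B u v \<Longrightarrow> mcong B v w \<Longrightarrow> mcong B u w"
| cong: "mcong B u u' \<Longrightarrow> mcong B v v' \<Longrightarrow> mcong B (u @ v) (u' @ v')"
| inv1: "w \<in> words B \<Longrightarrow> mcong B (w @ winv w @ w) w"
| inv2: "u \<in> words B \<Longrightarrow> w \<in> words B \<Longrightarrow>
           mcong B (u @ winv u @ w @ winv w) (w @ winv w @ u @ winv u)"
| idem: "\<rho> \<in> Pset B \<Longrightarrow> mcong B [(\<rho>, False), (\<rho>, False)] [(\<rho>, False)]"
| rel: "\<rho> \<in> Pset B \<Longrightarrow> mcong B [(\<rho>, False)] ((\<rho>, False) # bl B \<rho>)"

definition Mrel :: "'l dcx \<Rightarrow> ('l word \<times> 'l word) set" where
  "Mrel B = {(u, v). mcong B u v}"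

definition Mcar :: "'l dcx \<Rightarrow> 'l word set set" where
  "Mcar B = words B // Mrel B"

definition mmul :: "'l dcx \<Rightarrow> 'l word set \<Rightarrow> 'l word set \<Rightarrow> 'l word set" where
  "mmul B m n = (\<Union>u\<in>m. \<Union>v\<in>n. Mrel B `` {u @ v})"

definition mone :: "'l dcx \<Rightarrow> 'l word set" where
  "mone B = Mrel B `` {[]}"

definition minv :: "'l dcx \<Rightarrow> 'l word set \<Rightarrow> 'l word set" where
  "minv B m = (\<Union>u\<in>m. Mrel B `` {winv u})"

definition midem :: "'l dcx \<Rightarrow> 'l word set \<Rightarrow> bool" where
  "midem B e \<longleftrightarrow> e \<in> Mcar B \<and> mmul B e e = e"

definition mleq :: "'l dcx \<Rightarrow> 'l word set \<Rightarrow> 'l word set \<Rightarrow> bool" where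
  "mleq B a b \<longleftrightarrow> a \<in> Mcar B \<and> b \<in> Mcar B \<and> (\<exists>e. midem B e \<and> a = mmul B e b)"

definition inv_submonoid :: "'l dcx \<Rightarrow> 'l word set set \<Rightarrow> 'l word set set \<Rightarrow> bool" where
  "inv_submonoid B S N \<longleftrightarrow> N \<subseteq> S \<and> mone B \<in> N \<and>
     (\<forall>a\<in>N. \<forall>b\<in>N. mmul B a b \<in> N) \<and> (\<forall>a\<in>N. minv B a \<in> N)"

text \<open>Closed inverse submonoid N of S: N = N^omega (upward closure taken inside S).\<close>
definition closed_inv_submonoid :: "'l dcx \<Rightarrow> 'l word set set \<Rightarrow> 'l word set set \<Rightarrow> bool" where
  "closed_inv_submonoid B S N \<longleftrightarrow> inv_submonoid B S N \<and>
     {m \<in> S. \<exists>n\<in>N. mleq B n m} = N"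

definition conjugate :: "'l dcx \<Rightarrow> 'l word set set \<Rightarrow> 'l word set set \<Rightarrow> 'l word set set \<Rightarrow> bool" where
  "conjugate B L H K \<longleftrightarrow> (\<exists>m\<in>L.
     (\<forall>h\<in>H. mmul B (mmul B m h) (minv B m) \<in> K) \<and>
     (\<forall>k\<in>K. mmul B (mmul B (minv B m) k) m \<in> H))"

definition step :: "'l dcx \<Rightarrow> 'c dcx \<Rightarrow> ('c \<Rightarrow> 'l) \<Rightarrow> 'c \<Rightarrow> 'l \<times> bool \<Rightarrow> 'c option" where
  "step B C lab v x = (case x of (a, isinv) \<Rightarrow>
     if a \<in> Xset B then
       (if \<not> isinv then
          (if (\<exists>!e. e \<in> dcells C 1 \<and> lab e = a \<and> dface C 1 e = v)
           then Some (dface C 0 (THE e. e \<in> dcells C 1 \<and> lab e = a \<and> dface C 1 e = v))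
           else None)
        else
          (if (\<exists>!e. e \<in> dcells C 1 \<and> lab e = a \<and> dface C 0 e = v)
           then Some (dface C 1 (THE e. e \<in> dcells C 1 \<and> lab e = a \<and> dface C 0 e = v))
           else None))
     else if a \<in> Pset B then
       (if (\<exists>k c. c \<in> dcells C k \<and> lab c = a \<and> root C k c = v) then Some v else None)
     else None)"

definition act :: "'l dcx \<Rightarrow> 'c dcx \<Rightarrow> ('c \<Rightarrow> 'l) \<Rightarrow> 'c \<Rightarrow> 'l word \<Rightarrow> 'c option" where
  "act B C lab v w = fold (\<lambda>x ov. Option.bind ov (\<lambda>v'. step B C lab v' x)) w (Some v)"

definition loopmon :: "'l dcx \<Rightarrow> 'c dcx \<Rightarrow> ('c \<Rightarrow> 'l) \<Rightarrow> 'c \<Rightarrow> 'l word set set" where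
  "loopmon B C lab v = {m \<in> Mcar B. \<exists>w\<in>m. act B C lab v w = Some v}"

definition realizes :: "'l dcx \<Rightarrow> 'c dcx \<Rightarrow> ('c \<Rightarrow> 'l) \<Rightarrow> 'c \<Rightarrow> 'l word set set \<Rightarrow>
    'd dcx \<Rightarrow> ('d \<Rightarrow> 'l) \<Rightarrow> ('d \<Rightarrow> 'c) \<Rightarrow> 'd \<Rightarrow> bool" where
  "realizes B C labC u H D labD f v \<longleftrightarrow>
     labeled B D labD \<and> dconnected D \<and> lab_immersion D labD C labC f \<and>
     v \<in> dcells D 0 \<and> f v = u \<and> loopmon B D labD v = H"

end

theory Submission
  imports Defs
begin

lemma dc_disj: "dcomplex C \<Longrightarrow> c \<in> dcells C k \<Longrightarrow> c \<in> dcells C j \<Longrightarrow> k = j"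
  unfolding dcomplex_def by blast

lemma dc_face: "dcomplex C \<Longrightarrow> 1 \<le> k \<Longrightarrow> c \<in> dcells C k \<Longrightarrow> i \<le> k \<Longrightarrow> dface C i c \<in> dcells C (k - 1)"
  unfolding dcomplex_def by blast

lemma dc_ident: "dcomplex C \<Longrightarrow> 2 \<le> k \<Longrightarrow> c \<in> dcells C k \<Longrightarrow> i < j \<Longrightarrow> j \<le> k \<Longrightarrow>
         dface C i (dface C j c) = dface C (j - 1) (dface C i c)"
  unfolding dcomplex_def by blast

lemma vert_face_aux:
  assumes C: "dcomplex C"
  shows "\<forall>c i j. c \<in> dcells C (Suc n) \<longrightarrow> i \<le> Suc n \<longrightarrow> j \<le> n \<longrightarrow>
     vert C n j (dface C i c) = vert C (Suc n) (if j < i then j else Suc j) c"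
proof (induction n)
  case 0
  show ?case
    apply (intro allI impI)
    subgoal for c i j by (cases i) auto
    done
next
  case (Suc m)
  show ?case
  proof (intro allI impI)
    fix c i j assume c: "c \<in> dcells C (Suc (Suc m))" and i: "i \<le> Suc (Suc m)" and j: "j \<le> Suc m"
    show "vert C (Suc m) j (dface C i c) = vert C (Suc (Suc m)) (if j < i then j else Suc j) c"
    proof (cases "i = Suc (Suc m)")
      case True
      then show ?thesis using j by simp
    next
      case False
      hence i': "i \<le> Suc m" using i by simp
      show ?thesis
      proof (cases "j < Suc m")
        case True
        have id: "dface C i (dface C (Suc (Suc m)) c) = dface C (Suc m) (dface C i c)"
          using dc_ident[OF C _ c, of i "Suc (Suc m)"] i' by simp
        have d: "dface C (Suc (Suc m)) c \<in> dcells C (Suc m)" using dc_face[OF C _ c, of "Suc (Suc m)"] by simp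
        have "vert C (Suc m) j (dface C i c) = vert C m j (dface C (Suc m) (dface C i c))"
          using True by simp
        also have "\<dots> = vert C m j (dface C i (dface C (Suc (Suc m)) c))" using id by simp
        also have "\<dots> = vert C (Suc m) (if j < i then j else Suc j) (dface C (Suc (Suc m)) c)"
          using Suc.IH[rule_format, OF d, of i j] i' True by simp
        also have "\<dots> = vert C (Suc (Suc m)) (if j < i then j else Suc j) c"
          using True by auto
        finally show ?thesis .
      next
        case False
        hence jm: "j = Suc m" using j by simp
        show ?thesis
        proof (cases "i = 0")
          case True
          then show ?thesis using jm by simp
        next
          case False
          have id: "dface C 0 (dface C i c) = dface C (i - 1) (dface C 0 c)"
            using dc_ident[OF C _ c, of 0 i] i' False by simp
          have d: "dface C 0 c \<in> dcells C (Suc m)" using dc_face[OF C _ c, of 0] by simp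
          have "vert C (Suc m) j (dface C i c) = vert C m m (dface C 0 (dface C i c))"
            using jm by simp
          also have "\<dots> = vert C m m (dface C (i - 1) (dface C 0 c))" using id by simp
          also have "\<dots> = vert C (Suc m) (Suc m) (dface C 0 c)"
          proof -
            have nm: "(if m < i - 1 then m else Suc m) = Suc m" using i' by auto
            show ?thesis using Suc.IH[rule_format, OF d, of "i - 1" m] nm i' by (simp del: vert.simps)
          qed
          also have "\<dots> = vert C (Suc (Suc m)) (if j < i then j else Suc j) c"
            using jm i' by simp
          finally show ?thesis .
        qed
      qed
    qed
  qed
qed

lemma vert_face:
  assumes "dcomplex C" "c \<in> dcells C k" "1 \<le> k" "i \<le> k" "j \<le> k - 1"
  shows "vert C (k - 1) j (dface C i c) = vert C k (if j < i then j else Suc j) c"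
  using vert_face_aux[OF assms(1), of "k - 1"] assms by (cases k) auto

lemma vert_cell0:
  assumes C: "dcomplex C"
  shows "c \<in> dcells C k \<Longrightarrow> j \<le> k \<Longrightarrow> vert C k j c \<in> dcells C 0"
proof (induction k arbitrary: c j)
  case 0 then show ?case by simp
next
  case (Suc k)
  have f1: "dface C (Suc k) c \<in> dcells C k" "dface C 0 c \<in> dcells C k"
    using dc_face[OF C _ Suc.prems(1)] by auto
  show ?case using Suc f1 by auto
qed

lemma root_face:
  assumes "dcomplex C" "c \<in> dcells C k" "1 \<le> i" "i \<le> k"
  shows "root C (k - 1) (dface C i c) = root C k c"
  using vert_face[OF assms(1,2), of i 0] assms unfolding root_def by auto

lemma root_face0:
  assumes "dcomplex C" "c \<in> dcells C k" "1 \<le> k"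
  shows "root C (k - 1) (dface C 0 c) = vert C k 1 c"
  using vert_face[OF assms(1,2,3), of 0 0] unfolding root_def by auto

lemma root_cell0: "dcomplex C \<Longrightarrow> c \<in> dcells C k \<Longrightarrow> root C k c \<in> dcells C 0"
  unfolding root_def by (rule vert_cell0) auto

lemma root0[simp]: "root C 0 c = c" unfolding root_def by simp

lemma root1: "root C 1 e = dface C 1 e" unfolding root_def by simp
lemma vert11: "vert C 1 1 e = dface C 0 e" by simp

declare edge01.simps[simp del]

lemma edge01_1[simp]: "edge01 C 1 c = c" by (simp add: edge01.simps)
lemma edge01_1'[simp]: "edge01 C (Suc 0) c = c" by (simp add: edge01.simps)
lemma edge01_Suc: "1 \<le> k \<Longrightarrow> edge01 C (Suc k) c = edge01 C k (dface C (Suc k) c)"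
  by (simp add: edge01.simps)

lemma edge01_props:
  assumes C: "dcomplex C"
  shows "c \<in> dcells C k \<Longrightarrow> 1 \<le> k \<Longrightarrow> edge01 C k c \<in> dcells C 1 \<and>
     dface C 1 (edge01 C k c) = root C k c \<and> dface C 0 (edge01 C k c) = vert C k 1 c"
proof (induction k arbitrary: c)
  case 0 then show ?case by simp
next
  case (Suc k)
  show ?case
  proof (cases "k = 0")
    case True
    then show ?thesis using Suc.prems by (simp add: root_def)
  next
    case False
    have d: "dface C (Suc k) c \<in> dcells C k" using dc_face[OF C _ Suc.prems(1)] by auto
    have IH: "edge01 C k (dface C (Suc k) c) \<in> dcells C 1 \<and>
     dface C 1 (edge01 C k (dface C (Suc k) c)) = root C k (dface C (Suc k) c) \<and>
     dface C 0 (edge01 C k (dface C (Suc k) c)) = vert C k 1 (dface C (Suc k) c)"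
      using Suc.IH[OF d] False by simp
    have r: "root C k (dface C (Suc k) c) = root C (Suc k) c"
      using root_face[OF C Suc.prems(1), of "Suc k"] by simp
    have v: "vert C k 1 (dface C (Suc k) c) = vert C (Suc k) 1 c"
      using False by simp
    show ?thesis using IH r v False by (simp add: edge01_Suc)
  qed
qed

lemma edge01_face:
  assumes C: "dcomplex C"
  shows "c \<in> dcells C k \<Longrightarrow> 2 \<le> j \<Longrightarrow> j \<le> k \<Longrightarrow> edge01 C (k - 1) (dface C j c) = edge01 C k c"
proof (induction k arbitrary: c j)
  case 0 then show ?case by simp
next
  case (Suc k)
  show ?case
  proof (cases "j = Suc k")
    case True
    then show ?thesis using Suc.prems by (simp add: edge01_Suc)
  next
    case False
    have d: "dface C (Suc k) c \<in> dcells C k" using dc_face[OF C _ Suc.prems(1)] by auto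
    have id: "dface C j (dface C (Suc k) c) = dface C k (dface C j c)"
      using dc_ident[OF C _ Suc.prems(1), of j "Suc k"] False Suc.prems by simp
    have k2: "2 \<le> k" using Suc.prems False by simp
    have "edge01 C k (dface C j c) = edge01 C (k - 1) (dface C k (dface C j c))"
      using k2 edge01_Suc[of "k - 1" C "dface C j c"] by simp
    also have "\<dots> = edge01 C (k - 1) (dface C j (dface C (Suc k) c))" using id by simp
    also have "\<dots> = edge01 C k (dface C (Suc k) c)" using Suc.IH[OF d, of j] Suc.prems False by simp
    also have "\<dots> = edge01 C (Suc k) c" using k2 by (simp add: edge01_Suc)
    finally show ?thesis by simp
  qed
qed

definition cmor :: "'c dcx \<Rightarrow> 'd dcx \<Rightarrow> ('c \<Rightarrow> 'd) \<Rightarrow> bool" where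
  "cmor C D f \<longleftrightarrow> (\<forall>k. \<forall>c\<in>dcells C k. f c \<in> dcells D k) \<and>
     (\<forall>k. \<forall>c\<in>dcells C k. \<forall>i\<le>k. 1 \<le> k \<longrightarrow> f (dface C i c) = dface D i (f c))"

lemma immersion_cmor: "immersion C D f \<Longrightarrow> cmor C D f"
  unfolding immersion_def cmor_def by blast

lemma dc_iso_cmor: "dc_iso C D f \<Longrightarrow> cmor C D f"
  unfolding dc_iso_def cmor_def by blast

lemma cmor_cell: "cmor C D f \<Longrightarrow> c \<in> dcells C k \<Longrightarrow> f c \<in> dcells D k"
  unfolding cmor_def by blast

lemma cmor_face: "cmor C D f \<Longrightarrow> c \<in> dcells C k \<Longrightarrow> i \<le> k \<Longrightarrow> 1 \<le> k \<Longrightarrow> f (dface C i c) = dface D i (f c)"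
  unfolding cmor_def by blast

lemma cmor_vert:
  assumes C: "dcomplex C" and f: "cmor C D f"
  shows "c \<in> dcells C k \<Longrightarrow> j \<le> k \<Longrightarrow> f (vert C k j c) = vert D k j (f c)"
proof (induction k arbitrary: c j)
  case 0 then show ?case by simp
next
  case (Suc k)
  have d: "dface C (Suc k) c \<in> dcells C k" "dface C 0 c \<in> dcells C k"
    using dc_face[OF C _ Suc.prems(1)] by auto
  have e: "f (dface C (Suc k) c) = dface D (Suc k) (f c)" "f (dface C 0 c) = dface D 0 (f c)"
    using cmor_face[OF f Suc.prems(1)] by auto
  show ?case using Suc.IH[OF d(1)] Suc.IH[OF d(2)] Suc.prems e by auto
qed

lemma cmor_root:
  assumes "dcomplex C" "cmor C D f" "c \<in> dcells C k"
  shows "f (root C k c) = root D k (f c)"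
  using cmor_vert[OF assms] unfolding root_def by simp

lemma cmor_edge01:
  assumes C: "dcomplex C" and f: "cmor C D f"
  shows "c \<in> dcells C k \<Longrightarrow> 1 \<le> k \<Longrightarrow> f (edge01 C k c) = edge01 D k (f c)"
proof (induction k arbitrary: c)
  case 0 then show ?case by simp
next
  case (Suc k)
  show ?case
  proof (cases "k = 0")
    case True then show ?thesis by simp
  next
    case False
    have d: "dface C (Suc k) c \<in> dcells C k"
      using dc_face[OF C _ Suc.prems(1)] by auto
    have e: "f (dface C (Suc k) c) = dface D (Suc k) (f c)"
      using cmor_face[OF f Suc.prems(1)] by auto
    show ?thesis using Suc.IH[OF d] False e by (simp add: edge01_Suc)
  qed
qed

lemma immersion_inj:
  "immersion C D f \<Longrightarrow> c1 \<in> dcells C k \<Longrightarrow> c2 \<in> dcells C k \<Longrightarrow> j \<le> k \<Longrightarrow>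
     vert C k j c1 = vert C k j c2 \<Longrightarrow> f c1 = f c2 \<Longrightarrow> c1 = c2"
  unfolding immersion_def by blast

lemma immersion_comp:
  assumes C: "dcomplex C" and f: "immersion C D f" and g: "immersion D E g"
  shows "immersion C E (g \<circ> f)"
proof -
  have cf: "cmor C D f" using immersion_cmor[OF f] .
  have cg: "cmor D E g" using immersion_cmor[OF g] .
  show ?thesis unfolding immersion_def
  proof (intro conjI allI ballI impI)
    fix k c assume "c \<in> dcells C k" then show "(g \<circ> f) c \<in> dcells E k"
      using cmor_cell[OF cf] cmor_cell[OF cg] by auto
  next
    fix k c i assume "c \<in> dcells C k" "i \<le> k" "1 \<le> k"
    then show "(g \<circ> f) (dface C i c) = dface E i ((g \<circ> f) c)"
      using cmor_face[OF cf, of c k i] cmor_face[OF cg cmor_cell[OF cf], of c k i] by auto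
  next
    fix k c1 c2 j assume c: "c1 \<in> dcells C k" "c2 \<in> dcells C k" "j \<le> k"
      and v: "vert C k j c1 = vert C k j c2" and e: "(g \<circ> f) c1 = (g \<circ> f) c2"
    have "vert D k j (f c1) = vert D k j (f c2)"
      using v cmor_vert[OF C cf c(1) c(3)] cmor_vert[OF C cf c(2) c(3)] by simp
    hence "f c1 = f c2" using immersion_inj[OF g cmor_cell[OF cf c(1)] cmor_cell[OF cf c(2)] c(3)] e by simp
    then show "c1 = c2" using immersion_inj[OF f c v] by simp
  qed
qed


lemma winv_Nil[simp]: "winv [] = []" by (simp add: winv_def)
lemma winv_append[simp]: "winv (u @ v) = winv v @ winv u" by (simp add: winv_def)
lemma winv_Cons: "winv (x # w) = winv w @ [(fst x, \<not> snd x)]" by (simp add: winv_def case_prod_beta)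
lemma winv_winv[simp]: "winv (winv u) = u" by (induction u) (auto simp: winv_def)
lemma winv_single[simp]: "winv [(a, b)] = [(a, \<not> b)]" by (simp add: winv_def)

lemma words_append[simp]: "u @ v \<in> words B \<longleftrightarrow> u \<in> words B \<and> v \<in> words B"
  by (simp add: words_def)
lemma words_Nil[simp]: "[] \<in> words B" by (simp add: words_def)
lemma words_Cons: "x # w \<in> words B \<longleftrightarrow> fst x \<in> Xset B \<union> Pset B \<and> w \<in> words B"
  by (cases x) (auto simp: words_def)
lemma winv_words[simp]: "winv u \<in> words B \<longleftrightarrow> u \<in> words B"
  by (auto simp: words_def winv_def)
lemma words_single[simp]: "[(a, b)] \<in> words B \<longleftrightarrow> a \<in> Xset B \<union> Pset B"
  by (simp add: words_def)

definition dd :: "'l word \<Rightarrow> 'l word" where "dd w = w @ winv w"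
lemma winv_dd[simp]: "winv (dd w) = dd w" by (simp add: dd_def)

locale bse =
  fixes B :: "'l dcx"
  assumes base: "is_base B"
begin

lemma dcB: "dcomplex B" using base unfolding is_base_def by blast

lemma Pset_dim: "\<rho> \<in> Pset B \<longleftrightarrow> (\<exists>k\<ge>2. \<rho> \<in> dcells B k)"
  unfolding Pset_def by auto

lemma XP_disj: "a \<in> Xset B \<Longrightarrow> a \<in> Pset B \<Longrightarrow> False"
  unfolding Xset_def Pset_dim using dc_disj[OF dcB] by fastforce

lemma the_dim: "\<rho> \<in> dcells B k \<Longrightarrow> (THE k. \<rho> \<in> dcells B k) = k"
  using dc_disj[OF dcB] by blast

lemma bl_eq: "\<rho> \<in> dcells B k \<Longrightarrow> bl B \<rho> = (if k = 2 then [(dface B 2 \<rho>, False), (dface B 0 \<rho>, False), (dface B 1 \<rho>, True)]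
     else map (\<lambda>i. (dface B i \<rho>, False)) (rev [1..<Suc k]) @
          [(edge01 B k \<rho>, False), (dface B 0 \<rho>, False), (edge01 B k \<rho>, True)])"
  unfolding bl_def using the_dim by simp

lemma bl_words: assumes "\<rho> \<in> Pset B" shows "bl B \<rho> \<in> words B"
proof -
  obtain k where k: "k \<ge> 2" "\<rho> \<in> dcells B k" using assms Pset_dim by blast
  have f: "\<And>i. i \<le> k \<Longrightarrow> dface B i \<rho> \<in> dcells B (k - 1)" using dc_face[OF dcB _ k(2)] k by auto
  show ?thesis
  proof (cases "k = 2")
    case True
    then show ?thesis using f by (simp add: bl_eq[OF k(2)] words_def Xset_def)
  next
    case False
    have P: "\<And>i. i \<le> k \<Longrightarrow> dface B i \<rho> \<in> Pset B" using f False k unfolding Pset_dim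
      by (metis Suc_1 Suc_leI diff_Suc_1 le_neq_implies_less less_diff_conv plus_1_eq_Suc)
    have e: "edge01 B k \<rho> \<in> Xset B" using edge01_props[OF dcB k(2)] k unfolding Xset_def by auto
    show ?thesis using False P e by (auto simp: bl_eq[OF k(2)] words_def)
  qed
qed

lemma mcong_words: "mcong B u v \<Longrightarrow> u \<in> words B \<and> v \<in> words B"
  by (induction rule: mcong.induct) (auto simp: bl_words words_Cons)

lemma mc_refl: "w \<in> words B \<Longrightarrow> mcong B w w" by (rule mcong.refl)
lemma mc_sym: "mcong B u v \<Longrightarrow> mcong B v u" by (rule mcong.sym)
lemma mc_trans: "mcong B u v \<Longrightarrow> mcong B v w \<Longrightarrow> mcong B u w" by (rule mcong.trans)
lemma mc_ctx: "mcong B u u' \<Longrightarrow> x \<in> words B \<Longrightarrow> y \<in> words B \<Longrightarrow> mcong B (x @ u @ y) (x @ u' @ y)"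
  by (metis mcong.cong mcong.refl)
lemma mc_L: "mcong B u u' \<Longrightarrow> x \<in> words B \<Longrightarrow> mcong B (x @ u) (x @ u')"
  using mc_ctx[of u u' x "[]"] by simp
lemma mc_R: "mcong B u u' \<Longrightarrow> y \<in> words B \<Longrightarrow> mcong B (u @ y) (u' @ y)"
  using mc_ctx[of u u' "[]" y] by simp
lemma mc_app: "mcong B u u' \<Longrightarrow> mcong B v v' \<Longrightarrow> mcong B (u @ v) (u' @ v')"
  by (rule mcong.cong)
lemma mc_inv1: "w \<in> words B \<Longrightarrow> mcong B (w @ winv w @ w) w" by (rule mcong.inv1)
lemma mc_inv2: "u \<in> words B \<Longrightarrow> w \<in> words B \<Longrightarrow> mcong B (dd u @ dd w) (dd w @ dd u)"
  using mcong.inv2[of u B w] by (simp add: dd_def)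
lemma mcw1: "mcong B u v \<Longrightarrow> u \<in> words B" using mcong_words by blast
lemma mcw2: "mcong B u v \<Longrightarrow> v \<in> words B" using mcong_words by blast

lemma letter_inv:
  assumes P: "\<rho> \<in> Pset B"
  shows "mcong B [(\<rho>, True)] [(\<rho>, False)]"
proof -
  define r where "r = [(\<rho>, False)]"
  define s where "s = [(\<rho>, True)]"
  have wr: "r \<in> words B" "s \<in> words B" using P by (auto simp: r_def s_def)
  have ws: "winv r = s" "winv s = r" by (auto simp: r_def s_def)
  have h1: "mcong B (s @ r @ s) s" using mc_inv1[OF wr(2)] ws by simp
  have h2: "mcong B (r @ s @ r) r" using mc_inv1[OF wr(1)] ws by simp
  have h3: "mcong B (r @ r) r" using mcong.idem[OF P] by (simp add: r_def)
  have h4: "mcong B (r @ r @ s @ s @ r @ r) (r @ r)" using mc_inv1[of "r @ r"] wr ws by simp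
  have a: "mcong B ((r @ r) @ (s @ s @ r @ r)) (r @ (s @ s @ r @ r))" using mc_R[OF h3, of "s @ s @ r @ r"] wr by simp
  have b: "mcong B ((r @ s @ s) @ (r @ r)) ((r @ s @ s) @ r)" using mc_L[OF h3, of "r @ s @ s"] wr by simp
  have "mcong B (r @ r @ s @ s @ r @ r) (r @ s @ s @ r)" using mc_trans[OF a[simplified] b[simplified]] by simp
  hence h5: "mcong B (r @ s @ s @ r) r" using h4 h3 by (meson mc_sym mc_trans)
  have "mcong B (s @ (r @ s @ s @ r) @ s) (s @ r @ s)" using mc_ctx[OF h5] wr by blast
  hence "mcong B ((s @ r @ s) @ (s @ r @ s)) (s @ r @ s)" by simp
  hence "mcong B (s @ s) (s @ r @ s)" using mc_app[OF h1 h1] by (meson mc_sym mc_trans)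
  hence h6: "mcong B s (s @ s)" using h1 by (meson mc_sym mc_trans)
  have c1: "mcong B (r @ s @ r) (r @ s @ s @ r)" using mc_ctx[OF h6, of r r] wr by simp
  have c2: "mcong B (r @ s @ s @ r) (s @ r @ r @ s)" using mc_inv2[OF wr(1) wr(2)] ws by (simp add: dd_def)
  have c3: "mcong B (s @ r @ r @ s) (s @ r @ s)" using mc_ctx[OF h3, of s s] wr by simp
  have "mcong B r s" using mc_trans[OF mc_sym[OF h2] mc_trans[OF c1 mc_trans[OF c2 mc_trans[OF c3 h1]]]] .
  then show ?thesis by (simp add: r_def s_def mc_sym)
qed

lemma rel_inv:
  assumes P: "\<rho> \<in> Pset B"
  shows "mcong B [(\<rho>, False)] (winv (bl B \<rho>) @ [(\<rho>, False)])"
proof -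
  define r where "r = [(\<rho>, False)]"
  define s where "s = [(\<rho>, True)]"
  define b where "b = bl B \<rho>"
  define bi where "bi = winv b"
  have w: "r \<in> words B" "s \<in> words B" "b \<in> words B" "bi \<in> words B"
    using P bl_words by (auto simp: r_def s_def b_def bi_def)
  have ws: "winv r = s" "winv s = r" "winv b = bi" "winv bi = b" by (auto simp: r_def s_def bi_def)
  have sr: "mcong B s r" using letter_inv[OF P] by (simp add: r_def s_def)
  have rr: "mcong B (r @ r) r" using mcong.idem[OF P] by (simp add: r_def)
  have rb: "mcong B r (r @ b)" using mcong.rel[OF P] by (simp add: r_def b_def)
  have a1: "mcong B ((r @ b) @ (bi @ s) @ (r @ b)) (r @ b)" using mc_inv1[of "r @ b"] w ws by simp
  have a2: "mcong B ((r @ b) @ (bi @ s) @ (r @ b)) (r @ b @ bi @ r @ r @ b)"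
    using mc_ctx[OF sr, of "r @ b @ bi" "r @ b"] w by simp
  have a3: "mcong B (r @ b @ bi @ r @ r @ b) (r @ b @ bi @ r @ b)"
    using mc_ctx[OF rr, of "r @ b @ bi" "b"] w by simp
  have a4: "mcong B (r @ b @ bi @ r @ b) (r @ b @ bi @ r)"
    using mc_L[OF mc_sym[OF rb], of "r @ b @ bi"] w by simp
  have star: "mcong B (r @ b @ bi @ r) r"
    using a1 a2 a3 a4 rb by (meson mc_sym mc_trans)
  define t where "t = bi @ r"
  have wt: "t \<in> words B" using w by (simp add: t_def)
  have rt: "mcong B (r @ t) r"
  proof -
    have "mcong B (r @ bi @ r) (r @ b @ bi @ r)" using mc_R[OF rb, of "bi @ r"] w by simp
    then show ?thesis using star by (simp add: t_def) (meson mc_trans)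
  qed
  have tdd: "mcong B (dd t) t"
  proof -
    have "dd t = bi @ r @ s @ b" by (simp add: dd_def t_def ws)
    moreover have "mcong B (bi @ r @ s @ b) (bi @ r @ r @ b)" using mc_ctx[OF sr, of "bi @ r" b] w by simp
    moreover have "mcong B (bi @ r @ r @ b) (bi @ r @ b)" using mc_ctx[OF rr, of bi b] w by simp
    moreover have "mcong B (bi @ r @ b) (bi @ r)" using mc_L[OF mc_sym[OF rb], of bi] w by simp
    ultimately show ?thesis by (simp add: t_def) (meson mc_trans)
  qed
  have rdd: "mcong B (dd r) r"
    using mc_L[OF sr, of r] rr w by (simp add: dd_def ws) (meson mc_trans)
  have "mcong B (r @ t) (dd r @ dd t)" using mc_app[OF rdd tdd] by (meson mc_sym)
  moreover have "mcong B (dd r @ dd t) (dd t @ dd r)" using mc_inv2 w wt by blast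
  moreover have "mcong B (dd t @ dd r) (t @ r)" using mc_app[OF tdd rdd] .
  moreover have "mcong B (t @ r) t" using mc_L[OF rr, of bi] w by (simp add: t_def)
  ultimately have "mcong B r t" using rt by (meson mc_sym mc_trans)
  then show ?thesis by (simp add: r_def t_def bi_def b_def)
qed

lemma winv_cong: "mcong B u v \<Longrightarrow> mcong B (winv u) (winv v)"
proof (induction rule: mcong.induct)
  case (refl w) then show ?case by (simp add: mc_refl)
next
  case (sym u v) then show ?case using mc_sym by blast
next
  case (trans u v w) then show ?case using mc_trans by blast
next
  case (cong u u' v v') then show ?case by (simp add: mc_app)
next
  case (inv1 w) then show ?case using mc_inv1[of "winv w"] by simp
next
  case (inv2 u w) then show ?case using mc_inv2[OF inv2(2) inv2(1)] by (simp add: dd_def)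
next
  case (idem \<rho>)
  have sr: "mcong B [(\<rho>, True)] [(\<rho>, False)]" using letter_inv[OF idem] .
  have "mcong B [(\<rho>, True), (\<rho>, True)] [(\<rho>, False), (\<rho>, False)]"
    using mc_app[OF sr sr] by simp
  then show ?case using mcong.idem[OF idem] sr by (simp add: winv_def) (meson mc_sym mc_trans)
next
  case (rel \<rho>)
  have sr: "mcong B [(\<rho>, True)] [(\<rho>, False)]" using letter_inv[OF rel] .
  have wb: "winv (bl B \<rho>) \<in> words B" using bl_words[OF rel] by simp
  have "mcong B (winv (bl B \<rho>) @ [(\<rho>, False)]) (winv (bl B \<rho>) @ [(\<rho>, True)])"
    using mc_L[OF mc_sym[OF sr] wb] .
  then show ?case using rel_inv[OF rel] sr
    by (simp add: winv_Cons) (meson mc_sym mc_trans)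
qed

definition didem :: "'l word \<Rightarrow> bool" where
  "didem e \<longleftrightarrow> e \<in> words B \<and> mcong B e (dd e)"

lemma didem_words: "didem e \<Longrightarrow> e \<in> words B" by (simp add: didem_def)

lemma didem_dd: "w \<in> words B \<Longrightarrow> didem (dd w)"
  unfolding didem_def using mc_R[OF mc_inv1[of w], of "winv w"] by (simp add: dd_def mc_sym)

lemma didem_Nil: "didem []" by (simp add: didem_def dd_def mc_refl)

lemma didem_idem: "didem e \<Longrightarrow> mcong B (e @ e) e"
proof -
  assume d: "didem e"
  have w: "e \<in> words B" using d by (simp add: didem_def)
  have "mcong B (e @ e) (dd e @ dd e)" using d by (simp add: didem_def mc_app)
  moreover have "mcong B (dd e @ dd e) (dd e)" using mc_R[OF mc_inv1[OF w], of "winv e"] w by (simp add: dd_def)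
  ultimately show ?thesis using d by (simp add: didem_def) (meson mc_sym mc_trans)
qed

lemma didem_winv: "didem e \<Longrightarrow> mcong B (winv e) e"
  using winv_cong[of e "dd e"] by (simp add: didem_def) (meson mc_sym mc_trans)

lemma didem_comm: "didem e \<Longrightarrow> didem f \<Longrightarrow> mcong B (e @ f) (f @ e)"
proof -
  assume d: "didem e" "didem f"
  have "mcong B (e @ f) (dd e @ dd f)" using d by (simp add: didem_def mc_app)
  moreover have "mcong B (dd e @ dd f) (dd f @ dd e)" using d mc_inv2 by (simp add: didem_def)
  moreover have "mcong B (dd f @ dd e) (f @ e)" using d by (simp add: didem_def mc_app mc_sym)
  ultimately show ?thesis by (meson mc_trans)
qed

lemma didem_cong: "mcong B e f \<Longrightarrow> didem e \<Longrightarrow> didem f"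
proof -
  assume m: "mcong B e f" and d: "didem e"
  have "mcong B (dd e) (dd f)" using m winv_cong[OF m] by (simp add: dd_def mc_app)
  then show ?thesis using m d mcw2[OF m] unfolding didem_def by (meson mc_sym mc_trans)
qed

lemma didem_append: "didem e \<Longrightarrow> didem f \<Longrightarrow> didem (e @ f)"
proof -
  assume d: "didem e" "didem f"
  have w: "e \<in> words B" "f \<in> words B" using d by (auto simp: didem_def)
  have "dd (e @ f) = e @ f @ winv f @ winv e" by (simp add: dd_def)
  moreover have "mcong B (e @ f @ winv f @ winv e) (e @ f @ f @ e)"
    using mc_app[OF mc_refl[of "e @ f"] mc_app[OF didem_winv[OF d(2)] didem_winv[OF d(1)]]] w by simp
  moreover have "mcong B (e @ f @ f @ e) (e @ f @ e)" using mc_ctx[OF didem_idem[OF d(2)], of e e] w by simp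
  moreover have "mcong B (e @ f @ e) (e @ e @ f)" using mc_L[OF didem_comm[OF d(2) d(1)], of e] w by simp
  moreover have "mcong B (e @ e @ f) (e @ f)" using mc_R[OF didem_idem[OF d(1)], of f] w by simp
  ultimately show ?thesis unfolding didem_def using w by (simp del: append_assoc add: append_assoc[symmetric])
      (meson mc_sym mc_trans)
qed

lemma didem_letter: "\<rho> \<in> Pset B \<Longrightarrow> didem [(\<rho>, b)]"
proof -
  assume P: "\<rho> \<in> Pset B"
  have r: "didem [(\<rho>, False)]"
  proof -
    have "mcong B [(\<rho>, False), (\<rho>, True)] [(\<rho>, False), (\<rho>, False)]"
      using mc_L[OF letter_inv[OF P], of "[(\<rho>, False)]"] P by simp
    then show ?thesis using mcong.idem[OF P] P unfolding didem_def dd_def by simp (meson mc_sym mc_trans)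
  qed
  show ?thesis
  proof (cases b)
    case True then show ?thesis using didem_cong[OF mc_sym[OF letter_inv[OF P]] r] by simp
  next
    case False then show ?thesis using r by simp
  qed
qed

definition le :: "'l word \<Rightarrow> 'l word \<Rightarrow> bool" where
  "le u v \<longleftrightarrow> (\<exists>e. didem e \<and> mcong B u (e @ v))"

lemma le_words: "le u v \<Longrightarrow> u \<in> words B \<and> v \<in> words B"
proof -
  assume "le u v"
  then obtain e where "mcong B u (e @ v)" unfolding le_def by blast
  then show ?thesis using mcong_words[of u "e @ v"] by simp
qed

lemma le_refl: "v \<in> words B \<Longrightarrow> le v v"
  unfolding le_def using didem_Nil mc_refl by fastforce

lemma le_trans: "le u v \<Longrightarrow> le v w \<Longrightarrow> le u w"
proof -
  assume "le u v" "le v w"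
  then obtain e f where e: "didem e" "mcong B u (e @ v)" and f: "didem f" "mcong B v (f @ w)"
    unfolding le_def by blast
  have "mcong B (e @ v) (e @ f @ w)" using mc_L[OF f(2)] didem_words[OF e(1)] .
  then show ?thesis unfolding le_def using e f didem_append
    by (metis append.assoc mc_trans)
qed

lemma le_cong: "mcong B u u' \<Longrightarrow> mcong B v v' \<Longrightarrow> le u v \<Longrightarrow> le u' v'"
proof -
  assume m: "mcong B u u'" "mcong B v v'" and "le u v"
  then obtain e where e: "didem e" "mcong B u (e @ v)" unfolding le_def by blast
  have "mcong B (e @ v) (e @ v')" using mc_L[OF m(2) didem_words[OF e(1)]] .
  then show ?thesis unfolding le_def using e m by (meson mc_sym mc_trans)
qed

lemma le_right: "le u v \<Longrightarrow> y \<in> words B \<Longrightarrow> le (u @ y) (v @ y)"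
  unfolding le_def using mc_R by fastforce

lemma le_left: assumes l: "le u v" and x: "x \<in> words B" shows "le (x @ u) (x @ v)"
proof -
  obtain e where e: "didem e" "mcong B u (e @ v)" using l unfolding le_def by blast
  have we: "e \<in> words B" using didem_words[OF e(1)] .
  have wv: "v \<in> words B" using mcw2[OF e(2)] by simp
  have d1: "didem (winv x @ x)" using didem_dd[of "winv x"] x by (simp add: dd_def)
  have c1: "mcong B (x @ e) (x @ e @ winv x @ x)"
  proof -
    have "mcong B (x @ e @ winv x @ x) (x @ (winv x @ x) @ e)" using mc_L[OF didem_comm[OF e(1) d1] x] by simp
    moreover have "mcong B (x @ (winv x @ x) @ e) (x @ e)" using mc_R[OF mc_inv1[OF x] we] by simp
    ultimately show ?thesis by (meson mc_sym mc_trans)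
  qed
  define f where "f = x @ e @ winv x"
  have df: "didem f"
  proof -
    have "dd f = (x @ e @ winv x @ x) @ winv e @ winv x" by (simp add: dd_def f_def)
    moreover have "mcong B ((x @ e @ winv x @ x) @ winv e @ winv x) ((x @ e) @ winv e @ winv x)"
      using mc_R[OF mc_sym[OF c1]] we x by simp
    moreover have "mcong B ((x @ e) @ winv e @ winv x) ((x @ e) @ e @ winv x)"
      using mc_ctx[OF didem_winv[OF e(1)], of "x @ e" "winv x"] we x by simp
    moreover have "mcong B ((x @ e) @ e @ winv x) (x @ e @ winv x)"
      using mc_ctx[OF didem_idem[OF e(1)], of x "winv x"] x by simp
    ultimately show ?thesis unfolding didem_def f_def using x we by simp (meson mc_sym mc_trans)
  qed
  have "mcong B (x @ u) (x @ e @ v)" using mc_L[OF e(2) x] .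
  moreover have "mcong B (x @ e @ v) (f @ x @ v)" using mc_R[OF c1 wv] by (simp add: f_def)
  ultimately show ?thesis unfolding le_def using df by (meson mc_trans)
qed

lemma le_drop: "didem e \<Longrightarrow> x \<in> words B \<Longrightarrow> y \<in> words B \<Longrightarrow> le (x @ e @ y) (x @ y)"
proof -
  assume d: "didem e" "x \<in> words B" "y \<in> words B"
  have "le e []" unfolding le_def using d(1) mc_refl didem_words by fastforce
  then show ?thesis using le_left[OF le_right[of e "[]" y] d(2)] d by simp
qed

lemma le_winv: "le u v \<Longrightarrow> le (winv u) (winv v)"
proof -
  assume "le u v"
  then obtain e where e: "didem e" "mcong B u (e @ v)" unfolding le_def by blast
  have wv: "v \<in> words B" using mcw2[OF e(2)] by simp
  have a: "mcong B (winv u) (winv v @ winv e)" using winv_cong[OF e(2)] by simp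
  have b: "mcong B (winv v @ winv e) (winv v @ e)" using mc_L[OF didem_winv[OF e(1)]] wv by simp
  have c: "le (winv v @ e) (winv v)" using le_drop[OF e(1), of "winv v" "[]"] wv by simp
  show ?thesis using le_cong[OF mc_sym[OF mc_trans[OF a b]] mc_refl c] wv by simp
qed

lemma le_didem_dd: assumes d: "didem e" and l: "le e x" shows "le e (dd x)"
proof -
  obtain f where f: "didem f" "mcong B e (f @ x)" using l unfolding le_def by blast
  have wx: "x \<in> words B" using mcw2[OF f(2)] by simp
  have wf: "f \<in> words B" using didem_words[OF f(1)] .
  have "mcong B e (dd e)" using d by (simp add: didem_def)
  moreover have "mcong B (dd e) (f @ x @ winv x @ winv f)"
    using mc_app[OF f(2) winv_cong[OF f(2)]] by (simp add: dd_def)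
  moreover have "mcong B (f @ x @ winv x @ winv f) (f @ dd x @ f)"
    using mc_L[OF didem_winv[OF f(1)], of "f @ x @ winv x"] wf wx by (simp add: dd_def)
  moreover have "mcong B (f @ dd x @ f) (f @ f @ dd x)"
    using mc_L[OF didem_comm[OF didem_dd[OF wx] f(1)] wf] .
  moreover have "mcong B (f @ f @ dd x) (f @ dd x)"
    using mc_R[OF didem_idem[OF f(1)], of "dd x"] wx by (simp add: dd_def)
  ultimately show ?thesis unfolding le_def using f(1) by (meson mc_trans)
qed

lemma didem_le_letters: "didem e \<Longrightarrow> didem f \<Longrightarrow> le (e @ f) f"
  using le_drop[of e "[]" f] didem_words by simp

lemma didem_le_lettersR: "didem e \<Longrightarrow> didem f \<Longrightarrow> le (e @ f) e"
  using le_drop[of f e "[]"] didem_words by simp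

abbreviation cls :: "'l word \<Rightarrow> 'l word set" where "cls w \<equiv> Mrel B `` {w}"

lemma equiv_M: "equiv (words B) (Mrel B)"
  unfolding equiv_def refl_on_def sym_def trans_def Mrel_def
  using mcong_words mc_refl mc_sym mc_trans by blast

lemma Mcar_cls: "w \<in> words B \<Longrightarrow> cls w \<in> Mcar B"
  unfolding Mcar_def by (rule quotientI)

lemma Mcar_E: "m \<in> Mcar B \<Longrightarrow> (\<And>w. w \<in> words B \<Longrightarrow> m = cls w \<Longrightarrow> P) \<Longrightarrow> P"
  unfolding Mcar_def by (erule quotientE) blast

lemma cls_eq: "u \<in> words B \<Longrightarrow> v \<in> words B \<Longrightarrow> cls u = cls v \<longleftrightarrow> mcong B u v"
  using eq_equiv_class_iff[OF equiv_M] unfolding Mrel_def by blast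

lemma in_cls: "w \<in> cls u \<longleftrightarrow> mcong B u w"
  unfolding Mrel_def by simp

lemma cls_self: "w \<in> words B \<Longrightarrow> w \<in> cls w"
  using in_cls mc_refl by blast

lemma mmul_cls: "u \<in> words B \<Longrightarrow> v \<in> words B \<Longrightarrow> mmul B (cls u) (cls v) = cls (u @ v)"
proof -
  assume w: "u \<in> words B" "v \<in> words B"
  have "x \<in> cls (u @ v)" if xm: "x \<in> mmul B (cls u) (cls v)" for x
  proof -
    obtain u' v' where "u' \<in> cls u" "v' \<in> cls v" "x \<in> cls (u' @ v')"
      using xm unfolding mmul_def by blast
    then show ?thesis unfolding in_cls using mc_app mc_trans by blast
  qed
  moreover have "cls (u @ v) \<subseteq> mmul B (cls u) (cls v)"
    unfolding mmul_def using cls_self w by blast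
  ultimately show ?thesis by blast
qed

lemma minv_cls: "u \<in> words B \<Longrightarrow> minv B (cls u) = cls (winv u)"
proof -
  assume w: "u \<in> words B"
  have "x \<in> cls (winv u)" if xm: "x \<in> minv B (cls u)" for x
  proof -
    obtain u' where "u' \<in> cls u" "x \<in> cls (winv u')"
      using xm unfolding minv_def by blast
    then show ?thesis unfolding in_cls using winv_cong mc_trans by blast
  qed
  moreover have "cls (winv u) \<subseteq> minv B (cls u)"
    unfolding minv_def using cls_self w by blast
  ultimately show ?thesis by blast
qed

lemma mone_cls: "mone B = cls []" by (simp add: mone_def)

lemma midem_cls: "didem e \<Longrightarrow> midem B (cls e)"
  unfolding midem_def using Mcar_cls didem_words mmul_cls didem_idem cls_eq
  by (metis words_append)

lemma mleq_of_le: "le u v \<Longrightarrow> mleq B (cls u) (cls v)"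
proof -
  assume l: "le u v"
  then obtain e where e: "didem e" "mcong B u (e @ v)" unfolding le_def by blast
  have w: "u \<in> words B" "v \<in> words B" "e \<in> words B" using le_words[OF l] didem_words[OF e(1)] by auto
  have "cls u = mmul B (cls e) (cls v)" using mmul_cls[OF w(3) w(2)] cls_eq e(2) w by simp
  then show ?thesis unfolding mleq_def using Mcar_cls w midem_cls[OF e(1)] by blast
qed

lemma closed_up:
  assumes H: "closed_inv_submonoid B S H" and u: "cls u \<in> H" and l: "le u v" and S: "cls v \<in> S"
  shows "cls v \<in> H"
proof -
  have "cls v \<in> {m \<in> S. \<exists>n\<in>H. mleq B n m}" using S u mleq_of_le[OF l] by blast
  then show ?thesis using H unfolding closed_inv_submonoid_def by simp
qed

lemma closed_mul: "closed_inv_submonoid B S H \<Longrightarrow> cls u \<in> H \<Longrightarrow> cls v \<in> H \<Longrightarrow>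
   u \<in> words B \<Longrightarrow> v \<in> words B \<Longrightarrow> cls (u @ v) \<in> H"
proof -
  assume a: "closed_inv_submonoid B S H" "cls u \<in> H" "cls v \<in> H" "u \<in> words B" "v \<in> words B"
  have "mmul B (cls u) (cls v) \<in> H" using a(1-3) unfolding closed_inv_submonoid_def inv_submonoid_def by blast
  then show ?thesis using mmul_cls[OF a(4,5)] by simp
qed

lemma closed_inv: "closed_inv_submonoid B S H \<Longrightarrow> cls u \<in> H \<Longrightarrow> u \<in> words B \<Longrightarrow> cls (winv u) \<in> H"
proof -
  assume a: "closed_inv_submonoid B S H" "cls u \<in> H" "u \<in> words B"
  have "minv B (cls u) \<in> H" using a(1-2) unfolding closed_inv_submonoid_def inv_submonoid_def by blast
  then show ?thesis using minv_cls[OF a(3)] by simp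
qed

lemma closed_one: "closed_inv_submonoid B S H \<Longrightarrow> cls [] \<in> H"
  unfolding closed_inv_submonoid_def inv_submonoid_def mone_cls by blast

lemma closed_sub: "closed_inv_submonoid B S H \<Longrightarrow> H \<subseteq> S"
  unfolding closed_inv_submonoid_def inv_submonoid_def by blast

lemma closed_cong: "cls u \<in> H \<Longrightarrow> mcong B u v \<Longrightarrow> cls v \<in> H"
proof -
  assume a: "cls u \<in> H" "mcong B u v"
  have "cls u = cls v" using cls_eq[OF mcw1[OF a(2)] mcw2[OF a(2)]] a(2) by simp
  then show ?thesis using a by simp
qed

end


lemma fold_bind_None: "fold (\<lambda>x ov. Option.bind ov (\<lambda>v'. g v' x)) w None = None"
  by (induction w) auto

locale lcx = bse B for B :: "'l dcx" +
  fixes C :: "'c dcx" and lab :: "'c \<Rightarrow> 'l"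
  assumes labC: "labeled B C lab"
begin

lemma dcC: "dcomplex C" using labC unfolding labeled_def by blast
lemma imC: "immersion C B lab" using labC unfolding labeled_def by blast
lemma cmC: "cmor C B lab" using immersion_cmor[OF imC] .

lemma lab_cell: "c \<in> dcells C k \<Longrightarrow> lab c \<in> dcells B k" using cmor_cell[OF cmC] .
lemma lab_face: "c \<in> dcells C k \<Longrightarrow> i \<le> k \<Longrightarrow> 1 \<le> k \<Longrightarrow> lab (dface C i c) = dface B i (lab c)"
  using cmor_face[OF cmC] .

lemma lab_X: "e \<in> dcells C 1 \<Longrightarrow> lab e \<in> Xset B" using lab_cell unfolding Xset_def by blast
lemma lab_P: "c \<in> dcells C k \<Longrightarrow> 2 \<le> k \<Longrightarrow> lab c \<in> Pset B" using lab_cell unfolding Pset_dim by blast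
lemma dim_X: "c \<in> dcells C k \<Longrightarrow> lab c \<in> Xset B \<Longrightarrow> k = 1"
  using lab_cell dc_disj[OF dcB] unfolding Xset_def by blast
lemma dim_P: "c \<in> dcells C k \<Longrightarrow> lab c \<in> Pset B \<Longrightarrow> 2 \<le> k"
  using lab_cell dc_disj[OF dcB] unfolding Pset_dim by blast
lemma dim_eq: "c1 \<in> dcells C k1 \<Longrightarrow> c2 \<in> dcells C k2 \<Longrightarrow> lab c1 = lab c2 \<Longrightarrow> k1 = k2"
  using lab_cell dc_disj[OF dcB] by metis

lemma edge_out_uniq: "e1 \<in> dcells C 1 \<Longrightarrow> e2 \<in> dcells C 1 \<Longrightarrow> lab e1 = lab e2 \<Longrightarrow>
   dface C 1 e1 = dface C 1 e2 \<Longrightarrow> e1 = e2"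
  using immersion_inj[OF imC, of e1 1 e2 0] by simp

lemma edge_in_uniq: "e1 \<in> dcells C 1 \<Longrightarrow> e2 \<in> dcells C 1 \<Longrightarrow> lab e1 = lab e2 \<Longrightarrow>
   dface C 0 e1 = dface C 0 e2 \<Longrightarrow> e1 = e2"
  using immersion_inj[OF imC, of e1 1 e2 1] by simp

lemma root_uniq: "c1 \<in> dcells C k1 \<Longrightarrow> c2 \<in> dcells C k2 \<Longrightarrow> lab c1 = lab c2 \<Longrightarrow>
   root C k1 c1 = root C k2 c2 \<Longrightarrow> c1 = c2"
proof -
  assume a: "c1 \<in> dcells C k1" "c2 \<in> dcells C k2" "lab c1 = lab c2" "root C k1 c1 = root C k2 c2"
  have "k1 = k2" using dim_eq a by blast
  then show ?thesis using immersion_inj[OF imC a(1), of c2 0] a unfolding root_def by simp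
qed

definition stepR :: "'c \<Rightarrow> 'l \<times> bool \<Rightarrow> 'c \<Rightarrow> bool" where
  "stepR v x w \<longleftrightarrow> (case x of (a, b) \<Rightarrow>
     (a \<in> Xset B \<and> \<not> b \<and> (\<exists>e\<in>dcells C 1. lab e = a \<and> dface C 1 e = v \<and> dface C 0 e = w)) \<or>
     (a \<in> Xset B \<and> b \<and> (\<exists>e\<in>dcells C 1. lab e = a \<and> dface C 0 e = v \<and> dface C 1 e = w)) \<or>
     (a \<in> Pset B \<and> w = v \<and> (\<exists>k c. c \<in> dcells C k \<and> lab c = a \<and> root C k c = v)))"

lemma step_iff: "step B C lab v x = Some w \<longleftrightarrow> stepR v x w"
proof (cases x)
  case (Pair a b)
  show ?thesis
  proof (cases "a \<in> Xset B")
    case True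
    have nP: "a \<notin> Pset B" using True XP_disj by blast
    show ?thesis
    proof (cases b)
      case False
      have "step B C lab v x = Some w \<longleftrightarrow> (\<exists>e\<in>dcells C 1. lab e = a \<and> dface C 1 e = v \<and> dface C 0 e = w)"
      proof
        assume s: "step B C lab v x = Some w"
        then have ex: "\<exists>!e. e \<in> dcells C 1 \<and> lab e = a \<and> dface C 1 e = v"
          using True False Pair by (simp add: step_def split: if_splits)
        then obtain e where e: "e \<in> dcells C 1 \<and> lab e = a \<and> dface C 1 e = v" by blast
        have "(THE e. e \<in> dcells C 1 \<and> lab e = a \<and> dface C 1 e = v) = e" using ex e by blast
        then have "step B C lab v x = Some (dface C 0 e)" using True False Pair ex by (simp add: step_def)
        then show "\<exists>e\<in>dcells C 1. lab e = a \<and> dface C 1 e = v \<and> dface C 0 e = w"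
          using s e by auto
      next
        assume "\<exists>e\<in>dcells C 1. lab e = a \<and> dface C 1 e = v \<and> dface C 0 e = w"
        then obtain e where e: "e \<in> dcells C 1" "lab e = a" "dface C 1 e = v" "dface C 0 e = w" by blast
        have ex: "\<exists>!e. e \<in> dcells C 1 \<and> lab e = a \<and> dface C 1 e = v"
        proof (rule ex1I[of _ e])
          show "e \<in> dcells C 1 \<and> lab e = a \<and> dface C 1 e = v" using e by blast
        next
          fix y assume "y \<in> dcells C 1 \<and> lab y = a \<and> dface C 1 y = v"
          then show "y = e" using edge_out_uniq[of y e] e by simp
        qed
        have "(THE e. e \<in> dcells C 1 \<and> lab e = a \<and> dface C 1 e = v) = e" using ex e by blast
        then show "step B C lab v x = Some w" using True False Pair e ex by (simp add: step_def)
      qed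
      then show ?thesis using True False Pair nP by (simp add: stepR_def)
    next
      case bT: True
      have "step B C lab v x = Some w \<longleftrightarrow> (\<exists>e\<in>dcells C 1. lab e = a \<and> dface C 0 e = v \<and> dface C 1 e = w)"
      proof
        assume s: "step B C lab v x = Some w"
        then have ex: "\<exists>!e. e \<in> dcells C 1 \<and> lab e = a \<and> dface C 0 e = v"
          using True bT Pair by (simp add: step_def split: if_splits)
        then obtain e where e: "e \<in> dcells C 1 \<and> lab e = a \<and> dface C 0 e = v" by blast
        have "(THE e. e \<in> dcells C 1 \<and> lab e = a \<and> dface C 0 e = v) = e" using ex e by blast
        then have "step B C lab v x = Some (dface C 1 e)" using True bT Pair ex by (simp add: step_def)
        then show "\<exists>e\<in>dcells C 1. lab e = a \<and> dface C 0 e = v \<and> dface C 1 e = w"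
          using s e by auto
      next
        assume "\<exists>e\<in>dcells C 1. lab e = a \<and> dface C 0 e = v \<and> dface C 1 e = w"
        then obtain e where e: "e \<in> dcells C 1" "lab e = a" "dface C 0 e = v" "dface C 1 e = w" by blast
        have ex: "\<exists>!e. e \<in> dcells C 1 \<and> lab e = a \<and> dface C 0 e = v"
        proof (rule ex1I[of _ e])
          show "e \<in> dcells C 1 \<and> lab e = a \<and> dface C 0 e = v" using e by blast
        next
          fix y assume "y \<in> dcells C 1 \<and> lab y = a \<and> dface C 0 y = v"
          then show "y = e" using edge_in_uniq[of y e] e by simp
        qed
        have "(THE e. e \<in> dcells C 1 \<and> lab e = a \<and> dface C 0 e = v) = e" using ex e by blast
        then show "step B C lab v x = Some w" using True bT Pair e ex by (simp add: step_def)
      qed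
      then show ?thesis using True bT Pair nP by (simp add: stepR_def)
    qed
  next
    case False
    then show ?thesis using Pair by (auto simp: step_def stepR_def)
  qed
qed

lemma step_None_iff: "step B C lab v x = None \<longleftrightarrow> (\<forall>w. \<not> stepR v x w)"
  using step_iff by (metis not_None_eq)

lemma stepR_fun: "stepR v x w1 \<Longrightarrow> stepR v x w2 \<Longrightarrow> w1 = w2"
  using step_iff by (metis option.inject)

lemma stepR_flip: "stepR v (a, b) w \<Longrightarrow> stepR w (a, \<not> b) v"
  unfolding stepR_def by auto

lemma step_XF: "e \<in> dcells C 1 \<Longrightarrow> step B C lab (dface C 1 e) (lab e, False) = Some (dface C 0 e)"
  using step_iff lab_X unfolding stepR_def by auto

lemma step_XT: "e \<in> dcells C 1 \<Longrightarrow> step B C lab (dface C 0 e) (lab e, True) = Some (dface C 1 e)"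
  using step_iff lab_X unfolding stepR_def by auto

lemma step_P: "c \<in> dcells C k \<Longrightarrow> 2 \<le> k \<Longrightarrow> step B C lab (root C k c) (lab c, b) = Some (root C k c)"
  using step_iff lab_P unfolding stepR_def by blast

lemma act_Nil[simp]: "act B C lab v [] = Some v" by (simp add: act_def)

lemma act_Cons: "act B C lab v (x # w) = (case step B C lab v x of None \<Rightarrow> None | Some y \<Rightarrow> act B C lab y w)"
  by (cases "step B C lab v x") (simp_all add: act_def fold_bind_None)

lemma act_append: "act B C lab v (u @ w) = (case act B C lab v u of None \<Rightarrow> None | Some y \<Rightarrow> act B C lab y w)"
proof (induction u arbitrary: v)
  case Nil then show ?case by simp
next
  case (Cons x u) then show ?case by (simp add: act_Cons split: option.split)
qed

lemma act_single: "act B C lab v [x] = step B C lab v x"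
  by (simp add: act_Cons split: option.split)

lemma act_snoc: "act B C lab v (u @ [x]) = (case act B C lab v u of None \<Rightarrow> None | Some y \<Rightarrow> step B C lab y x)"
  by (simp add: act_append act_single split: option.split)

lemma step_flip: "step B C lab v (a, b) = Some w \<Longrightarrow> step B C lab w (a, \<not> b) = Some v"
  using step_iff stepR_flip by blast

lemma act_winv: "act B C lab v w = Some y \<Longrightarrow> act B C lab y (winv w) = Some v"
proof (induction w arbitrary: v)
  case Nil then show ?case by simp
next
  case (Cons x w)
  obtain a b where x: "x = (a, b)" by (cases x)
  obtain v1 where s: "step B C lab v x = Some v1" and r: "act B C lab v1 w = Some y"
    using Cons.prems by (auto simp: act_Cons split: option.splits)
  have "act B C lab y (winv w) = Some v1" using Cons.IH[OF r] .
  moreover have "step B C lab v1 (a, \<not> b) = Some v" using step_flip s x by simp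
  ultimately show ?case by (simp add: winv_Cons x act_snoc)
qed

lemma act_inj: "act B C lab v1 w = Some y \<Longrightarrow> act B C lab v2 w = Some y \<Longrightarrow> v1 = v2"
proof -
  assume a: "act B C lab v1 w = Some y" and b: "act B C lab v2 w = Some y"
  have "act B C lab y (winv w) = Some v1" using act_winv[OF a] .
  moreover have "act B C lab y (winv w) = Some v2" using act_winv[OF b] .
  ultimately show ?thesis by simp
qed

lemma act_dd: "act B C lab v (u @ winv u @ w) = (if act B C lab v u = None then None else act B C lab v w)"
proof (cases "act B C lab v u")
  case None then show ?thesis by (simp add: act_append)
next
  case (Some y)
  then show ?thesis using act_winv[OF Some] by (simp add: act_append)
qed

lemma act_prefix: "act B C lab v (u @ w) = Some y \<Longrightarrow> \<exists>z. act B C lab v u = Some z \<and> act B C lab z w = Some y"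
  by (auto simp: act_append split: option.splits)

lemma act_map_P:
  assumes c: "c \<in> dcells C k" and k: "3 \<le> k"
  shows "set xs \<subseteq> {1..k} \<Longrightarrow> act B C lab (root C k c) (map (\<lambda>i. (dface B i (lab c), False)) xs) = Some (root C k c)"
proof (induction xs)
  case Nil then show ?case by simp
next
  case (Cons i xs)
  have i: "1 \<le> i" "i \<le> k" using Cons.prems by auto
  have f: "dface C i c \<in> dcells C (k - 1)" using dc_face[OF dcC _ c i(2)] k by simp
  have l: "lab (dface C i c) = dface B i (lab c)" using lab_face[OF c i(2)] k by simp
  have r: "root C (k - 1) (dface C i c) = root C k c" using root_face[OF dcC c i] .
  have "step B C lab (root C k c) (dface B i (lab c), False) = Some (root C k c)"
    using step_P[OF f, of False] l r k by simp
  then show ?case using Cons by (simp add: act_Cons)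
qed

lemma bl_read:
  assumes c: "c \<in> dcells C k" and k: "2 \<le> k"
  shows "act B C lab (root C k c) (bl B (lab c)) = Some (root C k c)"
proof -
  have lc: "lab c \<in> dcells B k" using lab_cell[OF c] .
  have fc: "\<And>i. i \<le> k \<Longrightarrow> dface C i c \<in> dcells C (k - 1)" using dc_face[OF dcC _ c] k by simp
  have lf: "\<And>i. i \<le> k \<Longrightarrow> lab (dface C i c) = dface B i (lab c)" using lab_face[OF c] k by simp
  show ?thesis
  proof (cases "k = 2")
    case True
    have e: "dface C 2 c \<in> dcells C 1" "dface C 1 c \<in> dcells C 1" "dface C 0 c \<in> dcells C 1"
      using fc True by auto
    have id1: "dface C 0 (dface C 2 c) = dface C 1 (dface C 0 c)" using dc_ident[OF dcC _ c, of 0 2] True by simp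
    have id2: "dface C 0 (dface C 1 c) = dface C 0 (dface C 0 c)" using dc_ident[OF dcC _ c, of 0 1] True by simp
    have id3: "dface C 1 (dface C 2 c) = dface C 1 (dface C 1 c)" using dc_ident[OF dcC _ c, of 1 2] True by simp
    have rt: "root C k c = dface C 1 (dface C 2 c)" using True by (simp add: root_def numeral_2_eq_2)
    have s1: "step B C lab (root C k c) (dface B 2 (lab c), False) = Some (dface C 0 (dface C 2 c))"
      using step_XF[OF e(1)] lf[of 2] rt True by simp
    have s2: "step B C lab (dface C 0 (dface C 2 c)) (dface B 0 (lab c), False) = Some (dface C 0 (dface C 0 c))"
      using step_XF[OF e(3)] lf[of 0] id1 by simp
    have s3: "step B C lab (dface C 0 (dface C 0 c)) (dface B 1 (lab c), True) = Some (root C k c)"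
      using step_XT[OF e(2)] lf[of 1] id2 id3 rt True by simp
    show ?thesis using s1 s2 s3 True by (simp add: bl_eq[OF lc] act_Cons)
  next
    case False
    hence k3: "3 \<le> k" using k by simp
    have a1: "act B C lab (root C k c) (map (\<lambda>i. (dface B i (lab c), False)) (rev [1..<Suc k])) = Some (root C k c)"
      by (rule act_map_P[OF c k3]) auto
    have ep: "edge01 C k c \<in> dcells C 1" "dface C 1 (edge01 C k c) = root C k c"
         "dface C 0 (edge01 C k c) = vert C k 1 c"
      using edge01_props[OF dcC c] k by auto
    have le: "lab (edge01 C k c) = edge01 B k (lab c)" using cmor_edge01[OF dcC cmC c] k by simp
    have s1: "step B C lab (root C k c) (edge01 B k (lab c), False) = Some (vert C k 1 c)"
      using step_XF[OF ep(1)] ep le by simp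
    have f0: "dface C 0 c \<in> dcells C (k - 1)" using fc by simp
    have r0: "root C (k - 1) (dface C 0 c) = vert C k 1 c" using root_face0[OF dcC c] k by simp
    have s2: "step B C lab (vert C k 1 c) (dface B 0 (lab c), False) = Some (vert C k 1 c)"
      using step_P[OF f0, of False] r0 lf[of 0] k3 by simp
    have s3: "step B C lab (vert C k 1 c) (edge01 B k (lab c), True) = Some (root C k c)"
      using step_XT[OF ep(1)] ep le by simp
    show ?thesis using a1 s1 s2 s3 False by (simp add: bl_eq[OF lc] act_append act_Cons)
  qed
qed

lemma act_cong: "mcong B u w \<Longrightarrow> act B C lab v u = act B C lab v w"
proof (induction arbitrary: v rule: mcong.induct)
  case (refl w) then show ?case by simp
next
  case (sym u v) then show ?case by simp
next
  case (trans u v w) then show ?case by simp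
next
  case (cong u u' v v') then show ?case by (simp add: act_append split: option.split)
next
  case (inv1 w)
  show ?case
  proof (cases "act B C lab v w")
    case None then show ?thesis by (simp add: act_append)
  next
    case (Some y) then show ?thesis using act_winv[OF Some] by (simp add: act_append)
  qed
next
  case (inv2 u w)
  then show ?case using act_dd[of v u "w @ winv w"] act_dd[of v w "u @ winv u"] act_dd[of v u "[]"] act_dd[of v w "[]"]
    by (simp split: if_splits)
next
  case (idem \<rho>)
  show ?case
  proof (cases "step B C lab v (\<rho>, False)")
    case None then show ?thesis by (simp add: act_Cons)
  next
    case (Some y)
    then have sR: "stepR v (\<rho>, False) y" using step_iff by blast
    have "\<rho> \<notin> Xset B" using idem XP_disj by blast
    then have "y = v" using sR idem by (simp add: stepR_def)
    then show ?thesis using Some by (simp add: act_Cons)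
  qed
next
  case (rel \<rho>)
  show ?case
  proof (cases "step B C lab v (\<rho>, False)")
    case None then show ?thesis by (simp add: act_Cons)
  next
    case (Some y)
    then have sR: "stepR v (\<rho>, False) y" using step_iff by blast
    have "\<rho> \<notin> Xset B" using rel XP_disj by blast
    then obtain k c where c: "y = v" "c \<in> dcells C k" "lab c = \<rho>" "root C k c = v"
      using sR rel by (auto simp: stepR_def)
    have k: "2 \<le> k" using dim_P[OF c(2)] c(3) rel by simp
    show ?thesis using Some bl_read[OF c(2) k] c by (simp add: act_Cons)
  qed
qed

lemma stepR_vertex: "v \<in> dcells C 0 \<Longrightarrow> stepR v x w \<Longrightarrow> w \<in> dcells C 0"
  unfolding stepR_def using dc_face[OF dcC, of 1] by (fastforce split: prod.splits)

lemma act_vertex: "v \<in> dcells C 0 \<Longrightarrow> act B C lab v w = Some y \<Longrightarrow> y \<in> dcells C 0"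
proof (induction w arbitrary: v)
  case Nil then show ?case by simp
next
  case (Cons x w)
  obtain v1 where "step B C lab v x = Some v1" "act B C lab v1 w = Some y"
    using Cons.prems by (auto simp: act_Cons split: option.splits)
  then show ?case using Cons stepR_vertex step_iff by blast
qed

lemma loopmon_cls: "w \<in> words B \<Longrightarrow> cls w \<in> loopmon B C lab v \<longleftrightarrow> act B C lab v w = Some v"
proof -
  assume w: "w \<in> words B"
  have "(\<exists>w'\<in>cls w. act B C lab v w' = Some v) \<longleftrightarrow> act B C lab v w = Some v"
  proof
    assume "\<exists>w'\<in>cls w. act B C lab v w' = Some v"
    then obtain w' where "w' \<in> cls w" "act B C lab v w' = Some v" by blast
    then show "act B C lab v w = Some v" using act_cong in_cls by metis
  next
    assume "act B C lab v w = Some v" then show "\<exists>w'\<in>cls w. act B C lab v w' = Some v" using cls_self[OF w] by blast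
  qed
  then show ?thesis unfolding loopmon_def using Mcar_cls[OF w] by simp
qed

lemma loopmon_sub: "loopmon B C lab v \<subseteq> Mcar B" unfolding loopmon_def by blast

lemma loopmon_E: "m \<in> loopmon B C lab v \<Longrightarrow> (\<And>w. w \<in> words B \<Longrightarrow> m = cls w \<Longrightarrow> act B C lab v w = Some v \<Longrightarrow> P) \<Longrightarrow> P"
proof -
  assume m: "m \<in> loopmon B C lab v" and h: "\<And>w. w \<in> words B \<Longrightarrow> m = cls w \<Longrightarrow> act B C lab v w = Some v \<Longrightarrow> P"
  have "m \<in> Mcar B" using m loopmon_sub by blast
  then obtain w where w: "w \<in> words B" "m = cls w" by (rule Mcar_E)
  then show P using h m loopmon_cls by blast
qed

lemma mem_loopmon: "m \<in> loopmon B C lab v \<Longrightarrow> w \<in> m \<Longrightarrow> act B C lab v w = Some v"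
proof -
  assume m: "m \<in> loopmon B C lab v" and w: "w \<in> m"
  obtain w0 where "m = cls w0" "act B C lab v w0 = Some v" using m by (rule loopmon_E)
  then show ?thesis using w in_cls act_cong by metis
qed

end


context lcx
begin

lemma connected_path:
  assumes con: "dconnected C" and v: "v \<in> dcells C 0" and x: "x \<in> dcells C 0"
  shows "\<exists>p\<in>words B. act B C lab v p = Some x"
proof -
  let ?R = "\<lambda>a b. \<exists>e\<in>dcells C 1. (dface C 1 e = a \<and> dface C 0 e = b) \<or> (dface C 1 e = b \<and> dface C 0 e = a)"
  have r: "?R\<^sup>*\<^sup>* v x" using con v x unfolding dconnected_def by blast
  then show ?thesis
  proof (induction rule: rtranclp_induct)
    case base then show ?case using words_Nil by (metis act_Nil)
  next
    case (step y z)
    then obtain p where p: "p \<in> words B" "act B C lab v p = Some y" by blast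
    from step(2) obtain e where e: "e \<in> dcells C 1"
      and d: "(dface C 1 e = y \<and> dface C 0 e = z) \<or> (dface C 1 e = z \<and> dface C 0 e = y)" by blast
    have lx: "lab e \<in> Xset B" using lab_X[OF e] .
    show ?case
    proof (cases "dface C 1 e = y \<and> dface C 0 e = z")
      case True
      have "act B C lab v (p @ [(lab e, False)]) = Some z" using p step_XF[OF e] True by (simp add: act_snoc)
      then show ?thesis using p lx by (intro bexI[of _ "p @ [(lab e, False)]"]) auto
    next
      case False
      then have F: "dface C 1 e = z" "dface C 0 e = y" using d by auto
      have "act B C lab v (p @ [(lab e, True)]) = Some z" using p step_XT[OF e] F by (simp add: act_snoc)
      then show ?thesis using p lx by (intro bexI[of _ "p @ [(lab e, True)]"]) auto
    qed
  qed
qed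

lemma act_words: "v \<in> dcells C 0 \<Longrightarrow> act B C lab v w = Some y \<Longrightarrow> w \<in> words B"
proof (induction w arbitrary: v)
  case Nil then show ?case by simp
next
  case (Cons x w)
  obtain a b where x: "x = (a, b)" by (cases x)
  obtain v1 where s: "step B C lab v x = Some v1" and r: "act B C lab v1 w = Some y"
    using Cons.prems by (auto simp: act_Cons split: option.splits)
  have "stepR v x v1" using s step_iff by blast
  then have "a \<in> Xset B \<union> Pset B" using x by (auto simp: stepR_def)
  moreover have "w \<in> words B" using Cons.IH[OF _ r] stepR_vertex[OF Cons.prems(1)] s step_iff by blast
  ultimately show ?case using x by (simp add: words_Cons)
qed

lemma root_vertex: "c \<in> dcells C k \<Longrightarrow> root C k c \<in> dcells C 0" using root_cell0[OF dcC] .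

lemma edge01_step: "c \<in> dcells C k \<Longrightarrow> 1 \<le> k \<Longrightarrow>
   act B C lab (root C k c) [(lab (edge01 C k c), False)] = Some (vert C k 1 c)"
  using edge01_props[OF dcC] step_XF act_single by metis

lemma P_step_cell: "c \<in> dcells C k \<Longrightarrow> 2 \<le> k \<Longrightarrow> act B C lab (root C k c) [(lab c, False)] = Some (root C k c)"
  using step_P act_single by metis

lemma vertex_label: assumes "x \<in> dcells C 0" "y \<in> dcells C 0" shows "lab x = lab y"
proof -
  obtain z where "dcells B 0 = {z}" using base unfolding is_base_def by blast
  then show ?thesis using lab_cell[of x 0] lab_cell[of y 0] assms by auto
qed

end

locale lmor = bse B + C: lcx B C labC + D: lcx B D labD
  for B :: "'l dcx" and C :: "'c dcx" and labC and D :: "'d dcx" and labD +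
  fixes f :: "'c \<Rightarrow> 'd"
  assumes fm: "cmor C D f" and flab: "\<And>k c. c \<in> dcells C k \<Longrightarrow> labD (f c) = labC c"
begin

lemma stepR_tr: "C.stepR v x w \<Longrightarrow> D.stepR (f v) x (f w)"
proof -
  assume s: "C.stepR v x w"
  obtain a b where x: "x = (a, b)" by (cases x)
  show ?thesis
  proof (cases "a \<in> Xset B")
    case True
    then obtain e where e: "e \<in> dcells C 1" "labC e = a"
      "(\<not> b \<and> dface C 1 e = v \<and> dface C 0 e = w) \<or> (b \<and> dface C 0 e = v \<and> dface C 1 e = w)"
      using s x XP_disj unfolding C.stepR_def by auto
    have fe: "f e \<in> dcells D 1" "labD (f e) = a" "f (dface C 1 e) = dface D 1 (f e)" "f (dface C 0 e) = dface D 0 (f e)"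
      using cmor_cell[OF fm e(1)] flab[OF e(1)] e(2) cmor_face[OF fm e(1)] by auto
    show ?thesis using e fe True x unfolding D.stepR_def by auto
  next
    case False
    then obtain k c where c: "a \<in> Pset B" "w = v" "c \<in> dcells C k" "labC c = a" "root C k c = v"
      using s x unfolding C.stepR_def by auto
    have "f c \<in> dcells D k" "labD (f c) = a" "root D k (f c) = f v"
      using cmor_cell[OF fm c(3)] flab[OF c(3)] c cmor_root[OF C.dcC fm c(3)] by auto
    then show ?thesis using c x unfolding D.stepR_def by auto
  qed
qed

lemma act_tr: "act B C labC v w = Some y \<Longrightarrow> act B D labD (f v) w = Some (f y)"
proof (induction w arbitrary: v)
  case Nil then show ?case by simp
next
  case (Cons x w)
  obtain v1 where s: "step B C labC v x = Some v1" and r: "act B C labC v1 w = Some y"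
    using Cons.prems by (auto simp: C.act_Cons split: option.splits)
  have "step B D labD (f v) x = Some (f v1)" using stepR_tr s C.step_iff D.step_iff by blast
  then show ?case using Cons.IH[OF r] by (simp add: D.act_Cons)
qed

lemma loop_sub: "loopmon B C labC v \<subseteq> loopmon B D labD (f v)"
proof
  fix m assume m: "m \<in> loopmon B C labC v"
  then obtain w where w: "w \<in> words B" "m = cls w" "act B C labC v w = Some v" by (rule C.loopmon_E)
  then show "m \<in> loopmon B D labD (f v)" using act_tr D.loopmon_cls by auto
qed

lemma part1: "closed_inv_submonoid B (loopmon B D labD (f v)) (loopmon B C labC v)"
proof -
  let ?L = "loopmon B C labC v"
  have sub: "?L \<subseteq> loopmon B D labD (f v)" using loop_sub .
  have one: "mone B \<in> ?L" using C.loopmon_cls[of "[]"] by (simp add: mone_cls)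
  have mul: "\<forall>a\<in>?L. \<forall>b\<in>?L. mmul B a b \<in> ?L"
  proof (intro ballI)
    fix a b assume a: "a \<in> ?L" and b: "b \<in> ?L"
    obtain u where u: "u \<in> words B" "a = cls u" "act B C labC v u = Some v" using a by (rule C.loopmon_E)
    obtain w where w: "w \<in> words B" "b = cls w" "act B C labC v w = Some v" using b by (rule C.loopmon_E)
    have "act B C labC v (u @ w) = Some v" using u w by (simp add: C.act_append)
    then show "mmul B a b \<in> ?L" using u w mmul_cls C.loopmon_cls by simp
  qed
  have inv: "\<forall>a\<in>?L. minv B a \<in> ?L"
  proof
    fix a assume a: "a \<in> ?L"
    obtain u where u: "u \<in> words B" "a = cls u" "act B C labC v u = Some v" using a by (rule C.loopmon_E)
    then show "minv B a \<in> ?L" using C.act_winv[OF u(3)] minv_cls C.loopmon_cls by simp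
  qed
  have cl: "{m \<in> loopmon B D labD (f v). \<exists>n\<in>?L. mleq B n m} = ?L"
  proof
    show "{m \<in> loopmon B D labD (f v). \<exists>n\<in>?L. mleq B n m} \<subseteq> ?L"
    proof clarify
      fix m n assume m: "m \<in> loopmon B D labD (f v)" and n: "n \<in> ?L" and le: "mleq B n m"
      obtain e where e: "midem B e" "n = mmul B e m" and mM: "m \<in> Mcar B" using le unfolding mleq_def by blast
      obtain t where t: "t \<in> words B" "e = cls t" using e(1) unfolding midem_def by (meson Mcar_E)
      obtain s where s: "s \<in> words B" "m = cls s" using mM by (rule Mcar_E)
      have "cls (t @ t) = cls t" using e(1) t mmul_cls unfolding midem_def by simp
      then have tt: "mcong B (t @ t) t" using cls_eq t by simp
      have "n = cls (t @ s)" using e(2) t s mmul_cls by simp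
      then have a: "act B C labC v (t @ s) = Some v" using n C.loopmon_cls t s by simp
      then obtain z where z: "act B C labC v t = Some z" "act B C labC z s = Some v" using C.act_prefix by blast
      have "act B C labC v (t @ t) = Some z" using C.act_cong[OF tt] z by simp
      then have "act B C labC z t = Some z" using z by (simp add: C.act_append)
      then have "v = z" using C.act_inj z(1) by blast
      then show "m \<in> ?L" using z s C.loopmon_cls by simp
    qed
  next
    show "?L \<subseteq> {m \<in> loopmon B D labD (f v). \<exists>n\<in>?L. mleq B n m}"
    proof clarify
      fix m assume m: "m \<in> ?L"
      obtain w where w: "w \<in> words B" "m = cls w" using m by (rule C.loopmon_E)
      have "mleq B m m" using mleq_of_le[OF le_refl[OF w(1)]] w by simp
      then show "m \<in> loopmon B D labD (f v) \<and> (\<exists>n\<in>?L. mleq B n m)" using m sub by blast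
    qed
  qed
  show ?thesis unfolding closed_inv_submonoid_def inv_submonoid_def using sub one mul inv cl by blast
qed

end


locale twoR = bse B + D1: lcx B D1 lab1 + D2: lcx B D2 lab2
  for B :: "'l dcx" and D1 :: "'a dcx" and lab1 and D2 :: "'b dcx" and lab2 +
  fixes v1 v2
  assumes v1: "v1 \<in> dcells D1 0" and v2: "v2 \<in> dcells D2 0"
    and con1: "dconnected D1" and con2: "dconnected D2"
    and L: "loopmon B D1 lab1 v1 = loopmon B D2 lab2 v2"
begin

definition hrel where "hrel x y \<longleftrightarrow> (\<exists>p\<in>words B. act B D1 lab1 v1 p = Some x \<and> act B D2 lab2 v2 p = Some y)"

lemma loop12: "p \<in> words B \<Longrightarrow> act B D1 lab1 v1 p = Some v1 \<Longrightarrow> act B D2 lab2 v2 p = Some v2"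
  using D1.loopmon_cls D2.loopmon_cls L by blast

lemma transfer: assumes a: "act B D1 lab1 v1 p = Some x" shows "\<exists>y. act B D2 lab2 v2 p = Some y"
proof -
  have p: "p \<in> words B" using D1.act_words[OF v1 a] .
  have "act B D1 lab1 v1 (p @ winv p) = Some v1" using a D1.act_winv[OF a] by (simp add: D1.act_append)
  then have "act B D2 lab2 v2 (p @ winv p) = Some v2" using loop12 p by simp
  then show ?thesis using D2.act_prefix by blast
qed

lemma hrel_fun: assumes a: "hrel x y1" and b: "hrel x y2" shows "y1 = y2"
proof -
  obtain p where p: "p \<in> words B" "act B D1 lab1 v1 p = Some x" "act B D2 lab2 v2 p = Some y1"
    using a unfolding hrel_def by blast
  obtain q where q: "q \<in> words B" "act B D1 lab1 v1 q = Some x" "act B D2 lab2 v2 q = Some y2"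
    using b unfolding hrel_def by blast
  have "act B D1 lab1 v1 (p @ winv q) = Some v1" using p q D1.act_winv[OF q(2)] by (simp add: D1.act_append)
  then have "act B D2 lab2 v2 (p @ winv q) = Some v2" using loop12 p q by simp
  then have "act B D2 lab2 y1 (winv q) = Some v2" using p by (simp add: D2.act_append)
  moreover have "act B D2 lab2 y2 (winv q) = Some v2" using D2.act_winv[OF q(3)] .
  ultimately show ?thesis using D2.act_inj by blast
qed

lemma hrel_total: assumes x: "x \<in> dcells D1 0" shows "\<exists>y. hrel x y"
proof -
  obtain p where p: "p \<in> words B" "act B D1 lab1 v1 p = Some x" using D1.connected_path[OF con1 v1 x] by blast
  then show ?thesis using transfer unfolding hrel_def by blast
qed

lemma hrel_vertex: "hrel x y \<Longrightarrow> x \<in> dcells D1 0 \<and> y \<in> dcells D2 0"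
  unfolding hrel_def using D1.act_vertex[OF v1] D2.act_vertex[OF v2] by blast

definition hv where "hv x = (THE y. hrel x y)"

lemma hv_eq: "hrel x y \<Longrightarrow> hv x = y"
  unfolding hv_def using hrel_fun by blast

lemma hv: "x \<in> dcells D1 0 \<Longrightarrow> hrel x (hv x)"
  using hrel_total hv_eq by metis

lemma hv_vertex: "x \<in> dcells D1 0 \<Longrightarrow> hv x \<in> dcells D2 0"
  using hv hrel_vertex by blast

lemma hv_v1: "hv v1 = v2"
proof -
  have "hrel v1 v2" unfolding hrel_def by (intro bexI[of _ "[]"]) auto
  then show ?thesis by (rule hv_eq)
qed

lemma hv_act: assumes x: "x \<in> dcells D1 0" and a: "act B D1 lab1 x w = Some x'"
  shows "act B D2 lab2 (hv x) w = Some (hv x')"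
proof -
  obtain p where p: "p \<in> words B" "act B D1 lab1 v1 p = Some x" "act B D2 lab2 v2 p = Some (hv x)"
    using hv[OF x] unfolding hrel_def by blast
  have w: "w \<in> words B" using D1.act_words[OF x a] .
  have "act B D1 lab1 v1 (p @ w) = Some x'" using p a by (simp add: D1.act_append)
  then obtain y' where y': "act B D2 lab2 v2 (p @ w) = Some y'" using transfer by blast
  then have "hrel x' y'" using p w \<open>act B D1 lab1 v1 (p @ w) = Some x'\<close> unfolding hrel_def by auto
  then have "hv x' = y'" by (rule hv_eq)
  then show ?thesis using y' p by (simp add: D2.act_append)
qed

lemma lab0: "x \<in> dcells D1 0 \<Longrightarrow> y \<in> dcells D2 0 \<Longrightarrow> lab2 y = lab1 x"
proof -
  assume a: "x \<in> dcells D1 0" "y \<in> dcells D2 0"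
  obtain z where "dcells B 0 = {z}" using base unfolding is_base_def by blast
  then show ?thesis using D1.lab_cell[OF a(1)] D2.lab_cell[OF a(2)] by auto
qed

lemma cell_ex: assumes c: "c \<in> dcells D1 k"
  shows "\<exists>c'. c' \<in> dcells D2 k \<and> lab2 c' = lab1 c \<and> root D2 k c' = hv (root D1 k c)"
proof -
  have rx: "root D1 k c \<in> dcells D1 0" using D1.root_vertex[OF c] .
  show ?thesis
  proof (cases "k = 0")
    case True
    then show ?thesis using c hv_vertex lab0 by (intro exI[of _ "hv c"]) auto
  next
    case False
    show ?thesis
    proof (cases "k = 1")
      case True
      have e: "c \<in> dcells D1 1" using c True by simp
      have "act B D1 lab1 (dface D1 1 c) [(lab1 c, False)] = Some (dface D1 0 c)"
        using D1.step_XF[OF e] D1.act_single by simp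
      moreover have "root D1 1 c = dface D1 1 c" by (simp add: root_def)
      ultimately have "act B D2 lab2 (hv (root D1 1 c)) [(lab1 c, False)] = Some (hv (dface D1 0 c))"
        using hv_act rx True by simp
      then have sR: "D2.stepR (hv (root D1 1 c)) (lab1 c, False) (hv (dface D1 0 c))"
        using D2.step_iff D2.act_single by simp
      have "lab1 c \<in> Xset B" using D1.lab_X[OF e] .
      then obtain e' where "e' \<in> dcells D2 1" "lab2 e' = lab1 c" "dface D2 1 e' = hv (root D1 1 c)"
        using sR XP_disj unfolding D2.stepR_def by auto
      then show ?thesis using True by (intro exI[of _ e']) (simp add: root_def)
    next
      case F2: False
      hence k2: "2 \<le> k" using False by simp
      have "act B D1 lab1 (root D1 k c) [(lab1 c, False)] = Some (root D1 k c)"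
        using D1.P_step_cell[OF c k2] .
      then have "act B D2 lab2 (hv (root D1 k c)) [(lab1 c, False)] = Some (hv (root D1 k c))"
        using hv_act rx by simp
      then have sR: "D2.stepR (hv (root D1 k c)) (lab1 c, False) (hv (root D1 k c))"
        using D2.step_iff D2.act_single by simp
      have P: "lab1 c \<in> Pset B" using D1.lab_P[OF c k2] .
      then obtain k' c' where c': "c' \<in> dcells D2 k'" "lab2 c' = lab1 c" "root D2 k' c' = hv (root D1 k c)"
        using sR XP_disj unfolding D2.stepR_def by auto
      have "k' = k" using D1.lab_cell[OF c] D2.lab_cell[OF c'(1)] c'(2) dc_disj[OF dcB] by metis
      then show ?thesis using c' by blast
    qed
  qed
qed

definition hc where "hc c = (THE c'. \<exists>k. c \<in> dcells D1 k \<and> c' \<in> dcells D2 k \<and> lab2 c' = lab1 c \<and> root D2 k c' = hv (root D1 k c))"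

lemma hc: assumes c: "c \<in> dcells D1 k"
  shows "hc c \<in> dcells D2 k \<and> lab2 (hc c) = lab1 c \<and> root D2 k (hc c) = hv (root D1 k c)"
proof -
  obtain c' where c': "c' \<in> dcells D2 k" "lab2 c' = lab1 c" "root D2 k c' = hv (root D1 k c)"
    using cell_ex[OF c] by blast
  have "\<And>c'' k'. c \<in> dcells D1 k' \<and> c'' \<in> dcells D2 k' \<and> lab2 c'' = lab1 c \<and> root D2 k' c'' = hv (root D1 k' c) \<Longrightarrow> c'' = c'"
  proof -
    fix c'' k' assume a: "c \<in> dcells D1 k' \<and> c'' \<in> dcells D2 k' \<and> lab2 c'' = lab1 c \<and> root D2 k' c'' = hv (root D1 k' c)"
    have "k' = k" using a c dc_disj[OF D1.dcC] by blast
    then show "c'' = c'" using a c' D2.root_uniq[of c'' k c' k] by simp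
  qed
  then have "hc c = c'" unfolding hc_def using c c' by blast
  then show ?thesis using c' by simp
qed

lemma hc_vertex: "x \<in> dcells D1 0 \<Longrightarrow> hc x = hv x"
  using hc[of x 0] by simp

lemma hc_face: assumes c: "c \<in> dcells D1 k" and k: "1 \<le> k" and i: "i \<le> k"
  shows "hc (dface D1 i c) = dface D2 i (hc c)"
proof -
  have h: "hc c \<in> dcells D2 k" "lab2 (hc c) = lab1 c" "root D2 k (hc c) = hv (root D1 k c)" using hc[OF c] by auto
  have f1: "dface D1 i c \<in> dcells D1 (k - 1)" using dc_face[OF D1.dcC k c i] .
  have f2: "dface D2 i (hc c) \<in> dcells D2 (k - 1)" using dc_face[OF D2.dcC k h(1) i] .
  have hf: "hc (dface D1 i c) \<in> dcells D2 (k - 1)" "lab2 (hc (dface D1 i c)) = lab1 (dface D1 i c)"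
     "root D2 (k - 1) (hc (dface D1 i c)) = hv (root D1 (k - 1) (dface D1 i c))" using hc[OF f1] by auto
  have lab: "lab2 (dface D2 i (hc c)) = lab1 (dface D1 i c)"
    using D2.lab_face[OF h(1) i k] D1.lab_face[OF c i k] h(2) by simp
  have rt: "root D2 (k - 1) (dface D2 i (hc c)) = hv (root D1 (k - 1) (dface D1 i c))"
  proof (cases "i = 0")
    case False
    then show ?thesis using root_face[OF D2.dcC h(1), of i] root_face[OF D1.dcC c, of i] i h(3) by simp
  next
    case True
    have r2: "root D2 (k - 1) (dface D2 0 (hc c)) = vert D2 k 1 (hc c)" using root_face0[OF D2.dcC h(1) k] .
    have r1: "root D1 (k - 1) (dface D1 0 c) = vert D1 k 1 c" using root_face0[OF D1.dcC c k] .
    have a1: "act B D1 lab1 (root D1 k c) [(lab1 (edge01 D1 k c), False)] = Some (vert D1 k 1 c)"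
      using D1.edge01_step[OF c k] .
    have a2: "act B D2 lab2 (root D2 k (hc c)) [(lab2 (edge01 D2 k (hc c)), False)] = Some (vert D2 k 1 (hc c))"
      using D2.edge01_step[OF h(1) k] .
    have le: "lab2 (edge01 D2 k (hc c)) = lab1 (edge01 D1 k c)"
      using cmor_edge01[OF D2.dcC D2.cmC h(1) k] cmor_edge01[OF D1.dcC D1.cmC c k] h(2) by simp
    have "act B D2 lab2 (hv (root D1 k c)) [(lab1 (edge01 D1 k c), False)] = Some (hv (vert D1 k 1 c))"
      using hv_act[OF D1.root_vertex[OF c] a1] .
    then have "vert D2 k 1 (hc c) = hv (vert D1 k 1 c)" using a2 le h(3) by simp
    then show ?thesis using True r1 r2 by simp
  qed
  show ?thesis using D2.root_uniq[OF hf(1) f2] hf lab rt by simp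
qed

end

lemma twoR_swap: "twoR B D1 lab1 D2 lab2 v1 v2 \<Longrightarrow> twoR B D2 lab2 D1 lab1 v2 v1"
  unfolding twoR_def twoR_axioms_def by auto

context twoR
begin

lemma hc_iso: "dc_iso D1 D2 hc"
proof -
  interpret sw: twoR B D2 lab2 D1 lab1 v2 v1
    apply unfold_locales using v1 v2 con1 con2 L D1.labC D2.labC by auto
  have hsym: "\<And>x y. sw.hrel y x \<longleftrightarrow> hrel x y" unfolding hrel_def sw.hrel_def by blast
  have hv_inj: "\<And>x1 x2. x1 \<in> dcells D1 0 \<Longrightarrow> x2 \<in> dcells D1 0 \<Longrightarrow> hv x1 = hv x2 \<Longrightarrow> x1 = x2"
  proof -
    fix x1 x2 assume a: "x1 \<in> dcells D1 0" "x2 \<in> dcells D1 0" "hv x1 = hv x2"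
    have "sw.hrel (hv x1) x1" "sw.hrel (hv x1) x2" using hv[OF a(1)] hv[OF a(2)] a(3) hsym by auto
    then show "x1 = x2" using sw.hrel_fun by blast
  qed
  have hv_sw: "\<And>y. y \<in> dcells D2 0 \<Longrightarrow> hv (sw.hv y) = y"
    using sw.hv hsym hv_eq by blast
  have cells: "\<forall>k. \<forall>c\<in>dcells D1 k. hc c \<in> dcells D2 k" using hc by blast
  have faces: "\<forall>k. \<forall>c\<in>dcells D1 k. \<forall>i\<le>k. 1 \<le> k \<longrightarrow> hc (dface D1 i c) = dface D2 i (hc c)"
    using hc_face by blast
  have inj: "inj_on hc (allcells D1)"
  proof (rule inj_onI)
    fix c1 c2 assume a: "c1 \<in> allcells D1" "c2 \<in> allcells D1" "hc c1 = hc c2"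
    obtain k1 k2 where k: "c1 \<in> dcells D1 k1" "c2 \<in> dcells D1 k2" using a unfolding allcells_def by blast
    have "k1 = k2" using hc[OF k(1)] hc[OF k(2)] a(3) dc_disj[OF D2.dcC] by metis
    then have "root D1 k1 c1 = root D1 k1 c2" "lab1 c1 = lab1 c2"
      using hc[OF k(1)] hc[OF k(2)] a(3) hv_inj D1.root_vertex k by auto
    then show "c1 = c2" using D1.root_uniq k \<open>k1 = k2\<close> by metis
  qed
  have img: "hc ` allcells D1 = allcells D2"
  proof
    show "hc ` allcells D1 \<subseteq> allcells D2" using cells unfolding allcells_def by blast
  next
    show "allcells D2 \<subseteq> hc ` allcells D1"
    proof
      fix c' assume "c' \<in> allcells D2"
      then obtain k where c': "c' \<in> dcells D2 k" unfolding allcells_def by blast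
      have s: "sw.hc c' \<in> dcells D1 k" "lab1 (sw.hc c') = lab2 c'" "root D1 k (sw.hc c') = sw.hv (root D2 k c')"
        using sw.hc[OF c'] by auto
      have h: "hc (sw.hc c') \<in> dcells D2 k" "lab2 (hc (sw.hc c')) = lab2 c'"
        "root D2 k (hc (sw.hc c')) = root D2 k c'"
        using hc[OF s(1)] s hv_sw[OF D2.root_vertex[OF c']] by auto
      have "hc (sw.hc c') = c'" using D2.root_uniq[OF h(1) c'] h by simp
      moreover have "sw.hc c' \<in> allcells D1" using s(1) unfolding allcells_def by blast
      ultimately show "c' \<in> hc ` allcells D1" by (metis imageI)
    qed
  qed
  show ?thesis unfolding dc_iso_def bij_betw_def using inj img cells faces by blast
qed

end

theorem uniq_iso:
  assumes base: "is_base B" and lC: "labeled B C labC"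
   and l1: "labeled B D1 lab1" and l2: "labeled B D2 lab2"
   and c1: "dconnected D1" and c2: "dconnected D2"
   and i1: "lab_immersion D1 lab1 C labC f1" and i2: "lab_immersion D2 lab2 C labC f2"
   and v1: "v1 \<in> dcells D1 0" and v2: "v2 \<in> dcells D2 0" and fv: "f1 v1 = f2 v2"
   and L: "loopmon B D1 lab1 v1 = loopmon B D2 lab2 v2"
  shows "\<exists>h. dc_iso D1 D2 h \<and> h v1 = v2 \<and> (\<forall>k. \<forall>c\<in>dcells D1 k. f2 (h c) = f1 c \<and> lab2 (h c) = lab1 c)"
proof -
  interpret T: twoR B D1 lab1 D2 lab2 v1 v2
    using assms unfolding twoR_def twoR_axioms_def lcx_def lcx_axioms_def bse_def by blast
  interpret CC: lcx B C labC using assms unfolding lcx_def lcx_axioms_def bse_def by blast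
  interpret M1: lmor B D1 lab1 C labC f1
    using assms immersion_cmor unfolding lmor_def lmor_axioms_def lcx_def lcx_axioms_def bse_def lab_immersion_def by metis
  interpret M2: lmor B D2 lab2 C labC f2
    using assms immersion_cmor unfolding lmor_def lmor_axioms_def lcx_def lcx_axioms_def bse_def lab_immersion_def by metis
  have fvx: "\<And>x. x \<in> dcells D1 0 \<Longrightarrow> f2 (T.hv x) = f1 x"
  proof -
    fix x assume x: "x \<in> dcells D1 0"
    obtain p where p: "act B D1 lab1 v1 p = Some x" "act B D2 lab2 v2 p = Some (T.hv x)"
      using T.hv[OF x] unfolding T.hrel_def by blast
    have "act B C labC (f1 v1) p = Some (f1 x)" using M1.act_tr[OF p(1)] .
    moreover have "act B C labC (f2 v2) p = Some (f2 (T.hv x))" using M2.act_tr[OF p(2)] .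
    ultimately show "f2 (T.hv x) = f1 x" using fv by simp
  qed
  have fc: "\<forall>k. \<forall>c\<in>dcells D1 k. f2 (T.hc c) = f1 c \<and> lab2 (T.hc c) = lab1 c"
  proof (intro allI ballI)
    fix k c assume c: "c \<in> dcells D1 k"
    have h: "T.hc c \<in> dcells D2 k" "lab2 (T.hc c) = lab1 c" "root D2 k (T.hc c) = T.hv (root D1 k c)"
      using T.hc[OF c] by auto
    have a: "f2 (T.hc c) \<in> dcells C k" "f1 c \<in> dcells C k" using cmor_cell[OF M2.fm h(1)] cmor_cell[OF M1.fm c] .
    have "labC (f2 (T.hc c)) = labC (f1 c)" using M2.flab[OF h(1)] M1.flab[OF c] h(2) by simp
    moreover have "root C k (f2 (T.hc c)) = root C k (f1 c)"
      using cmor_root[OF T.D2.dcC M2.fm h(1)] cmor_root[OF T.D1.dcC M1.fm c] h(3) fvx[OF T.D1.root_vertex[OF c]] by simp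
    ultimately show "f2 (T.hc c) = f1 c \<and> lab2 (T.hc c) = lab1 c" using CC.root_uniq[OF a] h(2) by simp
  qed
  have "T.hc v1 = v2" using T.hc_vertex[OF v1] T.hv_v1 by simp
  then show ?thesis using T.hc_iso fc by blast
qed


context bse
begin

lemma cls_Mcar_words: "cls a \<in> Mcar B \<Longrightarrow> a \<in> words B"
proof -
  assume "cls a \<in> Mcar B"
  then obtain w where w: "w \<in> words B" "cls a = cls w" by (rule Mcar_E)
  then have "w \<in> cls a" using cls_self by simp
  then show ?thesis using in_cls mcw1 by blast
qed

lemma didem_conj: assumes e: "didem e" and x: "x \<in> words B" shows "didem (x @ e @ winv x)"
proof -
  have we: "e \<in> words B" using didem_words[OF e] .
  have d1: "didem (winv x @ x)" using didem_dd[of "winv x"] x by (simp add: dd_def)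
  have h0: "dd (x @ e @ winv x) = x @ e @ winv x @ x @ winv e @ winv x" by (simp add: dd_def)
  have h1: "mcong B (x @ e @ (winv x @ x) @ winv e @ winv x) (x @ e @ (winv x @ x) @ e @ winv x)"
    using mc_ctx[OF didem_winv[OF e], of "x @ e @ winv x @ x" "winv x"] x we by simp
  have h2: "mcong B (x @ e @ (winv x @ x) @ e @ winv x) (x @ (winv x @ x) @ e @ e @ winv x)"
    using mc_ctx[OF didem_comm[OF e d1], of x "e @ winv x"] x we by simp
  have h3: "mcong B (x @ (winv x @ x) @ e @ e @ winv x) (x @ e @ e @ winv x)"
    using mc_R[OF mc_inv1[OF x], of "e @ e @ winv x"] x we by simp
  have h4: "mcong B (x @ e @ e @ winv x) (x @ e @ winv x)"
    using mc_ctx[OF didem_idem[OF e], of x "winv x"] x by simp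
  have "mcong B (dd (x @ e @ winv x)) (x @ e @ winv x)"
    using mc_trans[OF h1 mc_trans[OF h2 mc_trans[OF h3 h4]]] h0 by simp
  then show ?thesis unfolding didem_def using x we by (simp add: mc_sym)
qed

lemma le_AB1: "didem A \<Longrightarrow> didem C' \<Longrightarrow> le (A @ C') A"
  using le_drop[of C' A "[]"] didem_words by simp

lemma le_AB2: "didem A \<Longrightarrow> didem C' \<Longrightarrow> le (A @ C') C'"
  using le_drop[of A "[]" C'] didem_words by simp

lemma didem_list: "(\<forall>x\<in>set xs. didem [x]) \<Longrightarrow> didem xs"
proof (induction xs)
  case Nil show ?case by (rule didem_Nil)
next
  case (Cons x xs) then show ?case using didem_append[of "[x]" xs] by simp
qed

lemma le_list_mem: "(\<forall>x\<in>set xs. didem [x]) \<Longrightarrow> y \<in> set xs \<Longrightarrow> le xs [y]"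
proof -
  assume a: "\<forall>x\<in>set xs. didem [x]" and y: "y \<in> set xs"
  obtain pre post where xs: "xs = pre @ y # post" using split_list[OF y] by blast
  have d: "didem pre" "didem post" "didem [y]" using a xs didem_list[of pre] didem_list[of post] by auto
  have "le (pre @ [y] @ post) (pre @ [y])" using le_AB1[OF didem_append[OF d(1) d(3)] d(2)] by simp
  moreover have "le (pre @ [y]) [y]" using le_AB2[OF d(1) d(3)] .
  ultimately have "le (pre @ [y] @ post) [y]" by (rule le_trans)
  then show ?thesis using xs by simp
qed

lemma le_conj: "le a b \<Longrightarrow> p \<in> words B \<Longrightarrow> le (p @ a @ winv p) (p @ b @ winv p)"
  using le_left le_right winv_words by (metis append.assoc)

end

context lcx
begin

declare winv_Cons[simp]

abbreviation xe :: "nat \<Rightarrow> 'c \<Rightarrow> 'l \<times> bool" where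
  "xe k c \<equiv> (lab (edge01 C k c), False)"

lemma bl_le:
  assumes c: "c \<in> dcells C k" and k: "3 \<le> k"
  shows "\<And>i. 1 \<le> i \<Longrightarrow> i \<le> k \<Longrightarrow> le [(lab c, False)] [(lab (dface C i c), False)]"
    and "le [(lab c, False)] ([xe k c] @ [(lab (dface C 0 c), False)] @ winv [xe k c])"
proof -
  have lc: "lab c \<in> dcells B k" using lab_cell[OF c] .
  have P: "lab c \<in> Pset B" using lab_P[OF c] k by simp
  have lf: "\<And>i. i \<le> k \<Longrightarrow> lab (dface C i c) = dface B i (lab c)" using lab_face[OF c] k by simp
  have fP: "\<And>i. i \<le> k \<Longrightarrow> lab (dface C i c) \<in> Pset B"
    using lab_P[OF dc_face[OF dcC _ c]] k by simp
  have le_e: "lab (edge01 C k c) = edge01 B k (lab c)" using cmor_edge01[OF dcC cmC c] k by simp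
  have ex: "lab (edge01 C k c) \<in> Xset B" using lab_X edge01_props[OF dcC c] k by simp
  define M where "M = map (\<lambda>i. (lab (dface C i c), False)) (rev [1..<Suc k])"
  define T where "T = [xe k c] @ [(lab (dface C 0 c), False)] @ winv [xe k c]"
  have blM: "bl B (lab c) = M @ T"
  proof -
    have "map (\<lambda>i. (dface B i (lab c), False)) (rev [1..<Suc k]) = M"
      unfolding M_def using lf by auto
    then show ?thesis using k le_e lf[of 0] by (simp add: bl_eq[OF lc] T_def)
  qed
  have dM: "\<forall>x\<in>set M. didem [x]" unfolding M_def using fP didem_letter by auto
  have dT: "didem T" unfolding T_def using didem_conj[OF didem_letter[OF fP[of 0]], of "[xe k c]"] ex by simp
  have "mcong B [(lab c, False)] ([(lab c, False)] @ bl B (lab c))" using mcong.rel[OF P] by simp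
  then have lbl: "le [(lab c, False)] (M @ T)" unfolding le_def using didem_letter[OF P] blM
    by (intro exI[of _ "[(lab c, False)]"]) simp
  have lM: "le [(lab c, False)] M" using le_trans[OF lbl le_AB1[OF didem_list[OF dM] dT]] .
  show "le [(lab c, False)] T" using le_trans[OF lbl le_AB2[OF didem_list[OF dM] dT]] .
  fix i assume i: "1 \<le> i" "i \<le> k"
  have "(lab (dface C i c), False) \<in> set M" unfolding M_def set_map
    using i by (intro imageI) (simp del: upt_Suc)
  then show "le [(lab c, False)] [(lab (dface C i c), False)]"
    using le_trans[OF lM le_list_mem[OF dM]] by blast
qed

lemma tri:
  "2 \<le> k \<Longrightarrow> c \<in> dcells C k \<Longrightarrow> le [(lab c, False)]
     ([xe k c] @ [xe (k - 1) (dface C 0 c)] @ winv [xe (k - 1) (dface C 1 c)])"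
proof (induction k arbitrary: c rule: nat_induct_at_least)
  case base
  have c: "c \<in> dcells C 2" using base .
  have lc: "lab c \<in> dcells B 2" using lab_cell[OF c] .
  have P: "lab c \<in> Pset B" using lab_P[OF c] by simp
  have lf: "\<And>i. i \<le> 2 \<Longrightarrow> lab (dface C i c) = dface B i (lab c)" using lab_face[OF c] by simp
  have e2: "edge01 C 2 c = dface C 2 c" by (simp add: edge01_Suc numeral_2_eq_2)
  have "mcong B [(lab c, False)] ([(lab c, False)] @ bl B (lab c))" using mcong.rel[OF P] by simp
  then have "le [(lab c, False)] (bl B (lab c))" unfolding le_def using didem_letter[OF P]
    by (intro exI[of _ "[(lab c, False)]"]) simp
  moreover have "bl B (lab c) = [xe 2 c] @ [xe (2 - 1) (dface C 0 c)] @ winv [xe (2 - 1) (dface C 1 c)]"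
    using lf[of 0] lf[of 1] lf[of 2] e2 by (simp add: bl_eq[OF lc])
  ultimately show ?case by simp
next
  case (Suc k)
  have c: "c \<in> dcells C (Suc k)" using Suc.prems .
  have k3: "3 \<le> Suc k" using Suc.hyps by simp
  have d: "dface C (Suc k) c \<in> dcells C k" using dc_face[OF dcC _ c] by simp
  have l1: "le [(lab c, False)] [(lab (dface C (Suc k) c), False)]" using bl_le(1)[OF c k3, of "Suc k"] by simp
  have IH: "le [(lab (dface C (Suc k) c), False)]
     ([xe k (dface C (Suc k) c)] @ [xe (k - 1) (dface C 0 (dface C (Suc k) c))] @ winv [xe (k - 1) (dface C 1 (dface C (Suc k) c))])"
    using Suc.IH[OF d] .
  have a1: "edge01 C k (dface C (Suc k) c) = edge01 C (Suc k) c" using edge01_face[OF dcC c, of "Suc k"] Suc.hyps by simp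
  have id0: "dface C 0 (dface C (Suc k) c) = dface C k (dface C 0 c)" using dc_ident[OF dcC _ c, of 0 "Suc k"] Suc.hyps by simp
  have id1: "dface C 1 (dface C (Suc k) c) = dface C k (dface C 1 c)" using dc_ident[OF dcC _ c, of 1 "Suc k"] Suc.hyps by simp
  have d0: "dface C 0 c \<in> dcells C k" "dface C 1 c \<in> dcells C k" using dc_face[OF dcC _ c] by auto
  have a2: "edge01 C (k - 1) (dface C k (dface C 0 c)) = edge01 C k (dface C 0 c)"
    using edge01_face[OF dcC d0(1), of k] Suc.hyps by simp
  have a3: "edge01 C (k - 1) (dface C k (dface C 1 c)) = edge01 C k (dface C 1 c)"
    using edge01_face[OF dcC d0(2), of k] Suc.hyps by simp
  show ?case using le_trans[OF l1 IH] a1 a2 a3 id0 id1 by simp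
qed

lemma tri_cons:
  assumes k: "2 \<le> k" and c: "c \<in> dcells C k"
  shows "le [(lab c, False)] (dd [xe k c])" "le [(lab c, False)] (dd [xe (k - 1) (dface C 1 c)])"
    "le [(lab c, False)] (dd [xe k c, xe (k - 1) (dface C 0 c)])"
    "le [(lab c, False)] ([xe (k - 1) (dface C 1 c)] @ winv [xe (k - 1) (dface C 0 c)] @ winv [xe k c])"
proof -
  let ?a = "xe k c" and ?b = "xe (k - 1) (dface C 0 c)" and ?d = "xe (k - 1) (dface C 1 c)"
  have P: "lab c \<in> Pset B" using lab_P[OF c k] .
  have dr: "didem [(lab c, False)]" using didem_letter[OF P] .
  have d0: "dface C 0 c \<in> dcells C (k - 1)" "dface C 1 c \<in> dcells C (k - 1)" using dc_face[OF dcC _ c] k by auto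
  have wa: "[?a] \<in> words B" using lab_X edge01_props[OF dcC c] k by simp
  have wb: "[?b] \<in> words B" using lab_X edge01_props[OF dcC d0(1)] k by simp
  have wd: "[?d] \<in> words B" using lab_X edge01_props[OF dcC d0(2)] k by simp
  have T: "le [(lab c, False)] ([?a] @ [?b] @ winv [?d])" using tri[OF k c] .
  have TT: "le [(lab c, False)] (dd ([?a] @ [?b] @ winv [?d]))" using le_didem_dd[OF dr T] .
  have "le (dd ([?a] @ [?b] @ winv [?d])) ([?a, ?b] @ winv [?b] @ winv [?a])"
    using le_drop[OF didem_dd[of "winv [?d]"], of "[?a, ?b]" "winv [?b] @ winv [?a]"] wa wb wd
    by (simp add: dd_def words_Cons)
  then have L3: "le [(lab c, False)] (dd [?a, ?b])" using le_trans[OF TT] by (simp add: dd_def words_Cons)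
  show "le [(lab c, False)] (dd [?a, ?b])" using L3 .
  have "le (dd [?a, ?b]) (dd [?a])"
    using le_drop[OF didem_dd[of "[?b]"], of "[?a]" "winv [?a]"] wa wb by (simp add: dd_def words_Cons)
  then show "le [(lab c, False)] (dd [?a])" using le_trans[OF L3] by simp
  have Ti: "le (winv [(lab c, False)]) (winv ([?a] @ [?b] @ winv [?d]))" using le_winv[OF T] .
  have m1: "mcong B (winv [(lab c, False)]) [(lab c, False)]" using letter_inv[OF P] by simp
  have w3: "winv ([?a] @ [?b] @ winv [?d]) \<in> words B" using wa wb wd by (simp only: winv_words words_append)
  have T2': "le [(lab c, False)] (winv ([?a] @ [?b] @ winv [?d]))"
    using le_cong[OF m1 mc_refl[OF w3] Ti] .
  have T2: "le [(lab c, False)] ([?d] @ winv [?b] @ winv [?a])"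
    using T2' by simp
  show "le [(lab c, False)] ([?d] @ winv [?b] @ winv [?a])" using T2 .
  have TT2: "le [(lab c, False)] (dd ([?d] @ winv [?b] @ winv [?a]))" using le_didem_dd[OF dr T2] .
  have "le (dd ([?d] @ winv [?b] @ winv [?a])) ([?d] @ winv [?b] @ [?b] @ winv [?d])"
    using le_drop[OF didem_dd[of "winv [?a]"], of "[?d] @ winv [?b]" "[?b] @ winv [?d]"] wa wb wd
    by (simp add: dd_def words_Cons)
  moreover have "le ([?d] @ winv [?b] @ [?b] @ winv [?d]) (dd [?d])"
    using le_drop[OF didem_dd[of "winv [?b]"], of "[?d]" "winv [?d]"] wa wb wd
    by (simp add: dd_def words_Cons)
  ultimately show "le [(lab c, False)] (dd [?d])" using le_trans[OF TT2] le_trans by blast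
qed

end


locale exH = lcx B C labC for B :: "'l dcx" and C :: "'c dcx" and labC +
  fixes u :: 'c and H :: "'l word set set"
  assumes u: "u \<in> dcells C 0"
    and Hc: "closed_inv_submonoid B (Mcar B) H" and HL: "H \<subseteq> loopmon B C labC u"
begin

abbreviation inH :: "'l word \<Rightarrow> bool" where "inH w \<equiv> cls w \<in> H"

lemma H_words: "inH w \<Longrightarrow> w \<in> words B"
  using closed_sub[OF Hc] cls_Mcar_words by blast
lemma H_one: "inH []" using closed_one[OF Hc] .
lemma H_mul: "inH a \<Longrightarrow> inH b \<Longrightarrow> inH (a @ b)" using closed_mul[OF Hc] H_words by blast
lemma H_inv: "inH a \<Longrightarrow> inH (winv a)" using closed_inv[OF Hc] H_words by blast
lemma H_up: "inH a \<Longrightarrow> le a b \<Longrightarrow> inH b"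
  using closed_up[OF Hc] le_words Mcar_cls by blast
lemma H_cong: "inH a \<Longrightarrow> mcong B a b \<Longrightarrow> inH b" using closed_cong .

definition eqv :: "'l word \<Rightarrow> 'l word \<Rightarrow> bool" where "eqv p q \<longleftrightarrow> inH (p @ winv q)"
definition rd :: "'l word \<Rightarrow> bool" where "rd p \<longleftrightarrow> inH (p @ winv p)"

lemma rd_eqv: "rd p = eqv p p" by (simp add: rd_def eqv_def)
lemma rd_words: "rd p \<Longrightarrow> p \<in> words B" unfolding rd_def using H_words[of "p @ winv p"] by simp
lemma eqv_words: "eqv p q \<Longrightarrow> p \<in> words B \<and> q \<in> words B" unfolding eqv_def using H_words[of "p @ winv q"] by simp

lemma H_conj: assumes e: "eqv q q'" and h: "inH (q' @ m @ winv q')" shows "inH (q @ m @ winv q)"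
proof -
  have w: "q \<in> words B" "q' \<in> words B" "m \<in> words B" using H_words[OF h] eqv_words[OF e] by auto
  have a: "inH (q @ winv q' @ q' @ m @ winv q' @ q' @ winv q)"
    using H_mul[OF e[unfolded eqv_def] H_mul[OF h H_inv[OF e[unfolded eqv_def]]]] by simp
  have l1: "le (q @ (winv q' @ q') @ (m @ winv q' @ q' @ winv q)) (q @ (m @ winv q' @ q' @ winv q))"
    using le_drop[OF didem_dd[of "winv q'"], of q "m @ winv q' @ q' @ winv q"] w by (simp add: dd_def)
  have l2: "le ((q @ m) @ (winv q' @ q') @ winv q) ((q @ m) @ winv q)"
    using le_drop[OF didem_dd[of "winv q'"], of "q @ m" "winv q"] w by (simp add: dd_def)
  show ?thesis using H_up[OF H_up[OF a] ] l1 l2 by simp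
qed

lemma eqv_sym: "eqv p q \<Longrightarrow> eqv q p"
  unfolding eqv_def using H_inv by fastforce

lemma eqv_trans: assumes a: "eqv p q" and b: "eqv q r" shows "eqv p r"
proof -
  have w: "p \<in> words B" "q \<in> words B" "r \<in> words B" using eqv_words[OF a] eqv_words[OF b] by auto
  have "inH (p @ (winv q @ q) @ winv r)" using H_mul[OF a[unfolded eqv_def] b[unfolded eqv_def]] by simp
  moreover have "le (p @ (winv q @ q) @ winv r) (p @ winv r)"
    using le_drop[OF didem_dd[of "winv q"]] w by (simp add: dd_def)
  ultimately show ?thesis unfolding eqv_def using H_up by blast
qed

lemma eqv_rd: "eqv p q \<Longrightarrow> rd p"
  using eqv_trans eqv_sym rd_eqv by blast

lemma rd_prefix: assumes a: "rd (p @ w)" shows "rd p"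
proof -
  have w: "p \<in> words B" "w \<in> words B" using rd_words[OF a] by auto
  have "le (p @ dd w @ winv p) (p @ winv p)" using le_drop[OF didem_dd[OF w(2)]] w by simp
  then show ?thesis using a H_up unfolding rd_def dd_def by simp
qed

lemma eqv_ext: assumes e: "eqv p q" and r: "rd (p @ w)" shows "rd (q @ w) \<and> eqv (p @ w) (q @ w)"
proof -
  have w: "p \<in> words B" "q \<in> words B" "w \<in> words B" using eqv_words[OF e] rd_words[OF r] by auto
  have "inH (p @ (w @ winv w) @ winv p)" using r unfolding rd_def by simp
  then have "inH (q @ (w @ winv w) @ winv q)" using H_conj[OF eqv_sym[OF e]] by blast
  then have r2: "rd (q @ w)" unfolding rd_def by simp
  have "inH ((p @ w @ winv w) @ (winv p @ p) @ winv q)"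
    using H_mul[OF r[unfolded rd_def] e[unfolded eqv_def]] by simp
  moreover have "le ((p @ w @ winv w) @ (winv p @ p) @ winv q) ((p @ w @ winv w) @ winv q)"
    using le_drop[OF didem_dd[of "winv p"], of "p @ w @ winv w" "winv q"] w by (simp add: dd_def)
  ultimately have "eqv (p @ w) (q @ w)" unfolding eqv_def using H_up by simp
  then show ?thesis using r2 by simp
qed

lemma eqv_cut: assumes e: "eqv (p @ w) (q @ w)" shows "eqv p q"
proof -
  have w: "p \<in> words B" "q \<in> words B" "w \<in> words B" using eqv_words[OF e] by auto
  have "le (p @ dd w @ winv q) (p @ winv q)" using le_drop[OF didem_dd[OF w(3)]] w by simp
  then show ?thesis using e H_up unfolding eqv_def dd_def by simp
qed

definition Vc :: "'l word \<Rightarrow> 'l word set set" where "Vc p = (\<lambda>r. {r}) ` {r. rd r \<and> eqv p r}"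

lemma Vc_eq: assumes "rd p" "rd q" shows "Vc p = Vc q \<longleftrightarrow> eqv p q"
proof
  assume V: "Vc p = Vc q"
  have "{q} \<in> Vc q" unfolding Vc_def using assms rd_eqv by blast
  then have "{q} \<in> Vc p" using V by simp
  then show "eqv p q" unfolding Vc_def by auto
next
  assume e: "eqv p q"
  have "{r. rd r \<and> eqv p r} = {r. rd r \<and> eqv q r}" using e eqv_sym eqv_trans by blast
  then show "Vc p = Vc q" unfolding Vc_def by simp
qed

definition repc :: "'l word set set \<Rightarrow> 'l word" where "repc X = (SOME p. rd p \<and> Vc p = X)"

lemma repc: "rd p \<Longrightarrow> rd (repc (Vc p)) \<and> Vc (repc (Vc p)) = Vc p"
  unfolding repc_def by (rule someI) blast

definition movec :: "'l word set set \<Rightarrow> 'l \<times> bool \<Rightarrow> 'l word set set" where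
  "movec X x = Vc (repc X @ [x])"

lemma movec: assumes "rd p" "rd (p @ [x])" shows "movec (Vc p) x = Vc (p @ [x])"
proof -
  let ?r = "repc (Vc p)"
  have r: "rd ?r" "Vc ?r = Vc p" using repc[OF assms(1)] by auto
  have e: "eqv p ?r" using r Vc_eq assms(1) by blast
  have "rd (?r @ [x]) \<and> eqv (p @ [x]) (?r @ [x])" using eqv_ext[OF e assms(2)] .
  then show ?thesis unfolding movec_def using Vc_eq assms(2) eqv_sym by auto
qed

lemma rd_act: assumes "rd p" shows "\<exists>w. act B C labC u p = Some w"
proof -
  have p: "p \<in> words B" using rd_words[OF assms] .
  have "cls (p @ winv p) \<in> loopmon B C labC u" using assms HL unfolding rd_def by blast
  then have "act B C labC u (p @ winv p) = Some u" using loopmon_cls p by simp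
  then show ?thesis using act_prefix by blast
qed

lemma eqv_act: assumes "eqv p q" shows "act B C labC u p = act B C labC u q"
proof -
  have w: "p @ winv q \<in> words B" using assms H_words unfolding eqv_def by blast
  have "cls (p @ winv q) \<in> loopmon B C labC u" using assms HL unfolding eqv_def by blast
  then have "act B C labC u (p @ winv q) = Some u" using loopmon_cls w by blast
  then obtain z where z: "act B C labC u p = Some z" "act B C labC z (winv q) = Some u"
    using act_prefix by blast
  then show ?thesis using act_winv[OF z(2)] by simp
qed

definition dimC :: "'c \<Rightarrow> nat" where "dimC c = (THE k. c \<in> dcells C k)"

lemma dimC: "c \<in> dcells C k \<Longrightarrow> dimC c = k"
  unfolding dimC_def using dc_disj[OF dcC] by blast

definition okc :: "nat \<Rightarrow> 'c \<Rightarrow> 'l word \<Rightarrow> bool" where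
  "okc k c p \<longleftrightarrow> (if k = 0 then True else if k = 1 then rd (p @ [(labC c, False)])
     else inH (p @ [(labC c, False)] @ winv p))"

definition inC :: "nat \<Rightarrow> 'c \<Rightarrow> 'l word \<Rightarrow> bool" where
  "inC k c p \<longleftrightarrow> c \<in> dcells C k \<and> rd p \<and> act B C labC u p = Some (root C k c) \<and> okc k c p"

definition cellsH :: "nat \<Rightarrow> ('c \<times> 'l word set set) set" where
  "cellsH k = {(c, Vc p) | c p. inC k c p}"

definition dfH :: "nat \<Rightarrow> 'c \<times> 'l word set set \<Rightarrow> 'c \<times> 'l word set set" where
  "dfH i cX = (case cX of (c, X) \<Rightarrow> (dface C i c,
      if i = 0 \<and> 1 \<le> dimC c then movec X (labC (edge01 C (dimC c) c), False) else X))"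

definition DH :: "('c \<times> 'l word set set) dcx" where
  "DH = \<lparr>dcells = cellsH, dface = dfH\<rparr>"

lemma DH_simps[simp]: "dcells DH = cellsH" "dface DH = dfH" by (simp_all add: DH_def)

lemma rd_ok_edge: assumes "inC k c p" "1 \<le> k" shows "rd (p @ [xe k c])"
proof (cases "k = 1")
  case True then show ?thesis using assms unfolding inC_def okc_def by simp
next
  case False
  then have k: "2 \<le> k" using assms by simp
  have c: "c \<in> dcells C k" "inH (p @ [(labC c, False)] @ winv p)" "rd p" using assms k unfolding inC_def okc_def by auto
  have "le (p @ [(labC c, False)] @ winv p) (p @ dd [xe k c] @ winv p)"
    using le_conj[OF tri_cons(1)[OF k c(1)] rd_words[OF c(3)]] .
  then show ?thesis using H_up[OF c(2)] unfolding rd_def by (simp add: dd_def)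
qed

lemma face_in: assumes ic: "inC k c p" and k: "1 \<le> k" and i: "i \<le> k"
  shows "inC (k - 1) (dface C i c) (if i = 0 then p @ [xe k c] else p) \<and>
         dfH i (c, Vc p) = (dface C i c, Vc (if i = 0 then p @ [xe k c] else p))"
proof -
  have c: "c \<in> dcells C k" "rd p" "act B C labC u p = Some (root C k c)" "okc k c p" using ic unfolding inC_def by auto
  have pw: "p \<in> words B" using rd_words[OF c(2)] .
  have dk: "dimC c = k" using dimC[OF c(1)] .
  have fc: "dface C i c \<in> dcells C (k - 1)" using dc_face[OF dcC k c(1) i] .
  show ?thesis
  proof (cases "i = 0")
    case True
    have r1: "rd (p @ [xe k c])" using rd_ok_edge[OF ic k] .
    have df: "dfH i (c, Vc p) = (dface C i c, Vc (p @ [xe k c]))"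
      using True dk k movec[OF c(2) r1] by (simp add: dfH_def)
    have act1: "act B C labC u (p @ [xe k c]) = Some (root C (k - 1) (dface C 0 c))"
      using c(3) edge01_step[OF c(1) k] root_face0[OF dcC c(1) k] by (simp add: act_append)
    have ok: "okc (k - 1) (dface C 0 c) (p @ [xe k c])"
    proof -
      consider "k = 1" | "k = 2" | "3 \<le> k" using k by linarith
      then show ?thesis
      proof cases
        case 1 then show ?thesis by (simp add: okc_def)
      next
        case 2
        have ok2: "inH (p @ [(labC c, False)] @ winv p)" using c(4) 2 by (simp add: okc_def)
        have "le (p @ [(labC c, False)] @ winv p) (p @ dd [xe k c, xe (k - 1) (dface C 0 c)] @ winv p)"
          using le_conj[OF tri_cons(3)[OF _ c(1)] pw] 2 by simp
        then have "rd (p @ [xe k c, xe (k - 1) (dface C 0 c)])" using H_up[OF ok2] unfolding rd_def by (simp add: dd_def)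
        then show ?thesis using 2 by (simp add: okc_def)
      next
        case 3
        have ok2: "inH (p @ [(labC c, False)] @ winv p)" using c(4) 3 by (simp add: okc_def)
        have "le (p @ [(labC c, False)] @ winv p) (p @ ([xe k c] @ [(labC (dface C 0 c), False)] @ winv [xe k c]) @ winv p)"
          using le_conj[OF bl_le(2)[OF c(1) 3] pw] .
        then have "inH ((p @ [xe k c]) @ [(labC (dface C 0 c), False)] @ winv (p @ [xe k c]))"
          using H_up[OF ok2] by simp
        moreover have "k - 1 \<noteq> 0" "k - 1 \<noteq> 1" using 3 by auto
        ultimately show ?thesis by (simp add: okc_def)
      qed
    qed
    show ?thesis using True df act1 ok r1 fc unfolding inC_def by simp
  next
    case False
    have df: "dfH i (c, Vc p) = (dface C i c, Vc p)" using False by (simp add: dfH_def)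
    have act1: "act B C labC u p = Some (root C (k - 1) (dface C i c))"
      using c(3) root_face[OF dcC c(1), of i] False i by simp
    have ok: "okc (k - 1) (dface C i c) p"
    proof -
      consider "k = 1" | "k = 2" | "3 \<le> k" using k by linarith
      then show ?thesis
      proof cases
        case 1 then show ?thesis by (simp add: okc_def)
      next
        case 2
        have ok2: "inH (p @ [(labC c, False)] @ winv p)" using c(4) 2 by (simp add: okc_def)
        have ii: "i = 1 \<or> i = 2" using False i 2 by auto
        have e2: "edge01 C 2 c = dface C 2 c" by (simp add: edge01_Suc numeral_2_eq_2)
        have "le [(labC c, False)] (dd [(labC (dface C i c), False)])"
          using tri_cons(1)[OF _ c(1)] tri_cons(2)[OF _ c(1)] 2 e2 ii by auto
        then have "le (p @ [(labC c, False)] @ winv p) (p @ dd [(labC (dface C i c), False)] @ winv p)"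
          using le_conj pw by blast
        then have "rd (p @ [(labC (dface C i c), False)])" using H_up[OF ok2] unfolding rd_def by (simp add: dd_def)
        then show ?thesis using 2 by (simp add: okc_def)
      next
        case 3
        have ok2: "inH (p @ [(labC c, False)] @ winv p)" using c(4) 3 by (simp add: okc_def)
        have "le (p @ [(labC c, False)] @ winv p) (p @ [(labC (dface C i c), False)] @ winv p)"
          using le_conj[OF bl_le(1)[OF c(1) 3] pw] False i by simp
        moreover have "k - 1 \<noteq> 0" "k - 1 \<noteq> 1" using 3 by auto
        ultimately show ?thesis using H_up[OF ok2] by (simp add: okc_def)
      qed
    qed
    show ?thesis using False df act1 ok c(2) fc unfolding inC_def by simp
  qed
qed

lemma cellsH_E: "cX \<in> cellsH k \<Longrightarrow> (\<And>c p. cX = (c, Vc p) \<Longrightarrow> inC k c p \<Longrightarrow> P) \<Longrightarrow> P"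
  unfolding cellsH_def by blast

lemma face_ident: assumes ic: "inC k c p" and k: "2 \<le> k" and ij: "i < j" "j \<le> k"
  shows "dfH i (dfH j (c, Vc p)) = dfH (j - 1) (dfH i (c, Vc p))"
proof -
  have c: "c \<in> dcells C k" using ic unfolding inC_def by simp
  have j1: "1 \<le> j" using ij by simp
  have Fj: "inC (k - 1) (dface C j c) p" "dfH j (c, Vc p) = (dface C j c, Vc p)"
    using face_in[OF ic _ ij(2)] k j1 by auto
  have id: "dface C i (dface C j c) = dface C (j - 1) (dface C i c)" using dc_ident[OF dcC k c ij] .
  show ?thesis
  proof (cases "i = 0")
    case False
    have Fi: "inC (k - 1) (dface C i c) p" "dfH i (c, Vc p) = (dface C i c, Vc p)"
      using face_in[OF ic _, of i] k ij False by auto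
    have L: "dfH i (dface C j c, Vc p) = (dface C i (dface C j c), Vc p)"
      using face_in[OF Fj(1), of i] k ij False by auto
    have R: "dfH (j - 1) (dface C i c, Vc p) = (dface C (j - 1) (dface C i c), Vc p)"
      using face_in[OF Fi(1), of "j - 1"] k ij False by auto
    show ?thesis using Fj(2) Fi(2) L R id by simp
  next
    case True
    let ?a = "xe k c"
    have Fi: "inC (k - 1) (dface C 0 c) (p @ [?a])" "dfH 0 (c, Vc p) = (dface C 0 c, Vc (p @ [?a]))"
      using face_in[OF ic _, of 0] k by auto
    have L: "dfH 0 (dface C j c, Vc p) = (dface C 0 (dface C j c), Vc (p @ [xe (k - 1) (dface C j c)]))"
      "inC (k - 2) (dface C 0 (dface C j c)) (p @ [xe (k - 1) (dface C j c)])"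
      using face_in[OF Fj(1), of 0] k by (auto simp: diff_diff_add numeral_2_eq_2)
    show ?thesis
    proof (cases "j = 1")
      case False
      have R: "dfH (j - 1) (dface C 0 c, Vc (p @ [?a])) = (dface C (j - 1) (dface C 0 c), Vc (p @ [?a]))"
        using face_in[OF Fi(1), of "j - 1"] k ij False by auto
      have "edge01 C (k - 1) (dface C j c) = edge01 C k c" using edge01_face[OF dcC c, of j] ij False by simp
      then show ?thesis using Fj(2) Fi(2) L R id True by simp
    next
      case j1: True
      let ?b = "xe (k - 1) (dface C 0 c)" and ?d = "xe (k - 1) (dface C 1 c)"
      have R: "dfH 0 (dface C 0 c, Vc (p @ [?a])) = (dface C 0 (dface C 0 c), Vc (p @ [?a] @ [?b]))"
        "inC (k - 2) (dface C 0 (dface C 0 c)) (p @ [?a] @ [?b])"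
        using face_in[OF Fi(1), of 0] k by (auto simp: diff_diff_add numeral_2_eq_2)
      have r1: "rd (p @ [?d])" using L(2) j1 unfolding inC_def by simp
      have r2: "rd (p @ [?a] @ [?b])" using R(2) unfolding inC_def by simp
      have ok: "inH (p @ [(labC c, False)] @ winv p)" using ic k unfolding inC_def okc_def by simp
      have pw: "p \<in> words B" using ic rd_words unfolding inC_def by simp
      have "le (p @ [(labC c, False)] @ winv p) (p @ ([?d] @ winv [?b] @ winv [?a]) @ winv p)"
        using le_conj[OF tri_cons(4)[OF k c] pw] .
      then have "eqv (p @ [?d]) (p @ [?a] @ [?b])" unfolding eqv_def using H_up[OF ok] by simp
      then have "Vc (p @ [?d]) = Vc (p @ [?a] @ [?b])" using Vc_eq r1 r2 by blast
      then show ?thesis using Fj(2) Fi(2) L R id True j1 by simp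
    qed
  qed
qed

lemma dcomplex_DH: "dcomplex DH"
proof -
  obtain n where n: "\<forall>k>n. dcells C k = {}" using dcC unfolding dcomplex_def by blast
  have disj: "\<forall>k j. k \<noteq> j \<longrightarrow> cellsH k \<inter> cellsH j = {}"
    unfolding cellsH_def inC_def using dc_disj[OF dcC] by blast
  have faces: "\<forall>k cX i. 1 \<le> k \<longrightarrow> cX \<in> cellsH k \<longrightarrow> i \<le> k \<longrightarrow> dfH i cX \<in> cellsH (k - 1)"
  proof (intro allI impI)
    fix k cX i assume a: "1 \<le> k" "cX \<in> cellsH k" "i \<le> k"
    obtain c p where cp: "cX = (c, Vc p)" "inC k c p" using a(2) by (rule cellsH_E)
    show "dfH i cX \<in> cellsH (k - 1)" using face_in[OF cp(2) a(1) a(3)] cp unfolding cellsH_def by blast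
  qed
  have ident: "\<forall>k cX i j. 2 \<le> k \<longrightarrow> cX \<in> cellsH k \<longrightarrow> i < j \<longrightarrow> j \<le> k \<longrightarrow>
         dfH i (dfH j cX) = dfH (j - 1) (dfH i cX)"
  proof (intro allI impI)
    fix k cX i j assume a: "2 \<le> k" "cX \<in> cellsH k" "i < j" "j \<le> k"
    obtain c p where cp: "cX = (c, Vc p)" "inC k c p" using a(2) by (rule cellsH_E)
    show "dfH i (dfH j cX) = dfH (j - 1) (dfH i cX)" using face_ident[OF cp(2) a(1) a(3) a(4)] cp by simp
  qed
  have fin: "\<forall>k>n. cellsH k = {}" using n unfolding cellsH_def inC_def by auto
  show ?thesis unfolding dcomplex_def using disj faces ident fin by auto
qed

fun pathw :: "nat \<Rightarrow> nat \<Rightarrow> 'c \<Rightarrow> 'l word" where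
  "pathw 0 j c = []"
| "pathw (Suc k) j c = (if j < Suc k then pathw k j (dface C (Suc k) c)
     else xe (Suc k) c # pathw k (j - 1) (dface C 0 c))"

lemma pathw0: "pathw k 0 c = []"
  by (induction k arbitrary: c) auto

lemma vert_H: "inC k c p \<Longrightarrow> j \<le> k \<Longrightarrow> rd (p @ pathw k j c) \<and>
    vert DH k j (c, Vc p) = (vert C k j c, Vc (p @ pathw k j c))"
proof (induction k arbitrary: c p j)
  case 0 then show ?case unfolding inC_def by simp
next
  case (Suc k)
  show ?case
  proof (cases "j < Suc k")
    case True
    have F: "inC k (dface C (Suc k) c) p" "dfH (Suc k) (c, Vc p) = (dface C (Suc k) c, Vc p)"
      using face_in[OF Suc.prems(1), of "Suc k"] by auto
    have "rd (p @ pathw k j (dface C (Suc k) c)) \<and>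
      vert DH k j (dface C (Suc k) c, Vc p) = (vert C k j (dface C (Suc k) c), Vc (p @ pathw k j (dface C (Suc k) c)))"
      using Suc.IH[OF F(1)] True by simp
    then show ?thesis using True F(2) by simp
  next
    case False
    then have j: "j = Suc k" using Suc.prems by simp
    have F: "inC k (dface C 0 c) (p @ [xe (Suc k) c])" "dfH 0 (c, Vc p) = (dface C 0 c, Vc (p @ [xe (Suc k) c]))"
      using face_in[OF Suc.prems(1), of 0] by auto
    have "rd ((p @ [xe (Suc k) c]) @ pathw k k (dface C 0 c)) \<and>
      vert DH k k (dface C 0 c, Vc (p @ [xe (Suc k) c])) = (vert C k k (dface C 0 c), Vc ((p @ [xe (Suc k) c]) @ pathw k k (dface C 0 c)))"
      using Suc.IH[OF F(1)] by simp
    then show ?thesis using j F(2) by simp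
  qed
qed

lemma root_H: "inC k c p \<Longrightarrow> root DH k (c, Vc p) = (root C k c, Vc p)"
  using vert_H[of k c p 0] pathw0 unfolding root_def by simp

lemma immersion_DH: "immersion DH C fst"
  unfolding immersion_def
proof (intro conjI allI ballI impI)
  fix k cX assume "cX \<in> dcells DH k"
  then show "fst cX \<in> dcells C k" by (auto elim!: cellsH_E simp: inC_def)
next
  fix k cX i assume a: "cX \<in> dcells DH k" "i \<le> k" "1 \<le> k"
  then show "fst (dface DH i cX) = dface C i (fst cX)" by (auto simp: dfH_def split: prod.split)
next
  fix k c1 c2 j assume a: "c1 \<in> dcells DH k" "c2 \<in> dcells DH k" "j \<le> k"
    and v: "vert DH k j c1 = vert DH k j c2" and f: "fst c1 = fst c2"
  obtain c p1 where 1: "c1 = (c, Vc p1)" "inC k c p1" using a(1) by (auto elim: cellsH_E)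
  obtain c' p2 where 2: "c2 = (c', Vc p2)" "inC k c' p2" using a(2) by (auto elim: cellsH_E)
  have cc: "c' = c" using f 1 2 by simp
  have h1: "rd (p1 @ pathw k j c)" "vert DH k j c1 = (vert C k j c, Vc (p1 @ pathw k j c))"
    using vert_H[OF 1(2) a(3)] 1 by auto
  have h2: "rd (p2 @ pathw k j c)" "vert DH k j c2 = (vert C k j c, Vc (p2 @ pathw k j c))"
    using vert_H[OF 2(2)[unfolded cc] a(3)] 2 cc by auto
  have "eqv (p1 @ pathw k j c) (p2 @ pathw k j c)" using v h1 h2 Vc_eq by auto
  then have "eqv p1 p2" by (rule eqv_cut)
  then have "Vc p1 = Vc p2" using Vc_eq 1(2) 2(2) unfolding inC_def by blast
  then show "c1 = c2" using 1 2 cc by simp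
qed

lemma labeled_DH: "labeled B DH (labC \<circ> fst)"
  unfolding labeled_def using dcomplex_DH immersion_comp[OF dcomplex_DH immersion_DH imC] by simp

lemma lab_immersion_DH: "lab_immersion DH (labC \<circ> fst) C labC fst"
  unfolding lab_immersion_def using immersion_DH by simp

definition vH where "vH = (u, Vc [])"

lemma rd_Nil: "rd []" unfolding rd_def using H_one by simp

lemma inC_v: "inC 0 u []" unfolding inC_def okc_def using u rd_Nil by simp

lemma vH_cell: "vH \<in> dcells DH 0"
proof -
  have "(u, Vc []) \<in> cellsH 0" unfolding cellsH_def using inC_v by blast
  then show ?thesis by (simp add: vH_def)
qed

end


context lcx
begin

abbreviation adj :: "'c \<Rightarrow> 'c \<Rightarrow> bool" where
  "adj \<equiv> (\<lambda>a b. \<exists>e\<in>dcells C 1. (dface C 1 e = a \<and> dface C 0 e = b) \<or> (dface C 1 e = b \<and> dface C 0 e = a))"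

lemma adj_sym: "adj\<^sup>*\<^sup>* a b \<Longrightarrow> adj\<^sup>*\<^sup>* b a"
proof (induction rule: rtranclp_induct)
  case base then show ?case by simp
next
  case (step y z)
  have "adj z y" using step(2) by blast
  then show ?case using step(3) by (rule converse_rtranclp_into_rtranclp)
qed

lemma act_conn: "act B C lab v p = Some y \<Longrightarrow> adj\<^sup>*\<^sup>* v y"
proof (induction p arbitrary: v)
  case Nil then show ?case by simp
next
  case (Cons x p)
  obtain v1 where s: "step B C lab v x = Some v1" and r: "act B C lab v1 p = Some y"
    using Cons.prems by (auto simp: act_Cons split: option.splits)
  have "stepR v x v1" using s step_iff by blast
  obtain a b where x: "x = (a, b)" by (cases x)
  have "v1 = v \<or> adj v v1"
  proof -
    have "(a \<in> Xset B \<and> \<not> b \<and> (\<exists>e\<in>dcells C 1. lab e = a \<and> dface C 1 e = v \<and> dface C 0 e = v1)) \<or>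
     (a \<in> Xset B \<and> b \<and> (\<exists>e\<in>dcells C 1. lab e = a \<and> dface C 0 e = v \<and> dface C 1 e = v1)) \<or>
     (a \<in> Pset B \<and> v1 = v \<and> (\<exists>k c. c \<in> dcells C k \<and> lab c = a \<and> root C k c = v))"
      using \<open>stepR v x v1\<close> x unfolding stepR_def by simp
    then show ?thesis by blast
  qed
  then show ?case
  proof
    assume "v1 = v" then show ?case using Cons.IH[OF r] by simp
  next
    assume "adj v v1" then show ?case using Cons.IH[OF r] by (rule converse_rtranclp_into_rtranclp)
  qed
qed

lemma conn_from: assumes "v \<in> dcells C 0" "\<forall>x\<in>dcells C 0. adj\<^sup>*\<^sup>* v x" shows "dconnected C"
  unfolding dconnected_def
proof (intro ballI)
  fix a b assume "a \<in> dcells C 0" "b \<in> dcells C 0"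
  then have "adj\<^sup>*\<^sup>* a v" "adj\<^sup>*\<^sup>* v b" using assms(2) adj_sym by blast+
  then show "adj\<^sup>*\<^sup>* a b" by (rule rtranclp_trans)
qed

end

context exH
begin

definition labH :: "'c \<times> 'l word set set \<Rightarrow> 'l" where "labH = labC \<circ> fst"
lemma labH_apply: "labH e = labC (fst e)" by (simp add: labH_def)

lemma labeled_DH': "lcx B DH labH"
  unfolding lcx_def lcx_axioms_def labH_def using labeled_DH base bse_def by blast

lemma P_facts: assumes P: "\<rho> \<in> Pset B" and q: "q \<in> words B"
  shows "rd (q @ [(\<rho>, b)]) \<longleftrightarrow> inH (q @ [(\<rho>, False)] @ winv q)"
    and "eqv (q @ [(\<rho>, b)]) q \<longleftrightarrow> inH (q @ [(\<rho>, False)] @ winv q)"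
proof -
  have d: "didem [(\<rho>, b)]" using didem_letter[OF P] .
  have m1: "mcong B [(\<rho>, b)] [(\<rho>, False)]"
    using letter_inv[OF P] mc_refl P by (cases b) auto
  have m2: "mcong B ([(\<rho>, b)] @ winv [(\<rho>, b)]) [(\<rho>, False)]"
    using mc_trans[OF mc_sym[OF d[unfolded didem_def, THEN conjunct2, unfolded dd_def]] m1] .
  have c1: "mcong B (q @ ([(\<rho>, b)] @ winv [(\<rho>, b)]) @ winv q) (q @ [(\<rho>, False)] @ winv q)"
    using mc_ctx[OF m2] q by simp
  have c2: "mcong B (q @ [(\<rho>, b)] @ winv q) (q @ [(\<rho>, False)] @ winv q)"
    using mc_ctx[OF m1] q by simp
  show "rd (q @ [(\<rho>, b)]) \<longleftrightarrow> inH (q @ [(\<rho>, False)] @ winv q)"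
    unfolding rd_def using H_cong c1 mc_sym[OF c1] by (simp del: winv_single) (meson H_cong)
  show "eqv (q @ [(\<rho>, b)]) q \<longleftrightarrow> inH (q @ [(\<rho>, False)] @ winv q)"
    unfolding eqv_def using H_cong c2 mc_sym[OF c2] by simp (meson H_cong)
qed

lemma stepH_b:
  assumes q: "rd q" and w': "act B C labC u q = Some w'"
    and s: "lcx.stepR B DH labH (w', Vc q) x y"
  shows "rd (q @ [x])"
proof -
  interpret DHL: lcx B DH labH using labeled_DH' .
  obtain a b where x: "x = (a, b)" by (cases x)
  have qw: "q \<in> words B" using rd_words[OF q] .
  have sR: "(a \<in> Xset B \<and> \<not> b \<and> (\<exists>e\<in>cellsH 1. labC (fst e) = a \<and> dfH 1 e = (w', Vc q) \<and> dfH 0 e = y)) \<or>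
     (a \<in> Xset B \<and> b \<and> (\<exists>e\<in>cellsH 1. labC (fst e) = a \<and> dfH 0 e = (w', Vc q) \<and> dfH 1 e = y)) \<or>
     (a \<in> Pset B \<and> y = (w', Vc q) \<and> (\<exists>k c. c \<in> cellsH k \<and> labC (fst c) = a \<and> root DH k c = (w', Vc q)))"
    using s x unfolding DHL.stepR_def by (simp add: labH_apply)
  consider (F) "a \<in> Xset B" "\<not> b" "\<exists>e\<in>cellsH 1. labC (fst e) = a \<and> dfH 1 e = (w', Vc q) \<and> dfH 0 e = y"
    | (T) "a \<in> Xset B" "b" "\<exists>e\<in>cellsH 1. labC (fst e) = a \<and> dfH 0 e = (w', Vc q) \<and> dfH 1 e = y"
    | (P) "a \<in> Pset B" "y = (w', Vc q)" "\<exists>k c. c \<in> cellsH k \<and> labC (fst c) = a \<and> root DH k c = (w', Vc q)"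
    using sR by blast
  then show ?thesis
  proof cases
    case F
    then obtain c p where cp: "inC 1 c p" "labC c = a" "dfH 1 (c, Vc p) = (w', Vc q)"
      by (auto elim!: cellsH_E)
    have "dfH 1 (c, Vc p) = (dface C 1 c, Vc p)" using face_in[OF cp(1), of 1] by simp
    then have "Vc p = Vc q" using cp by simp
    then have e: "eqv p q" using Vc_eq q cp(1) unfolding inC_def by blast
    have "rd (p @ [(a, False)])" using cp unfolding inC_def okc_def by simp
    then show ?thesis using eqv_ext[OF e] x F by simp
  next
    case T
    then obtain c p where cp: "inC 1 c p" "labC c = a" "dfH 0 (c, Vc p) = (w', Vc q)"
      by (auto elim!: cellsH_E)
    have "dfH 0 (c, Vc p) = (dface C 0 c, Vc (p @ [(a, False)]))" using face_in[OF cp(1), of 0] cp(2) by simp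
    then have V: "Vc (p @ [(a, False)]) = Vc q" using cp by simp
    have r: "rd (p @ [(a, False)])" using cp unfolding inC_def okc_def by simp
    have e: "eqv (p @ [(a, False)]) q" using Vc_eq[OF r q] V by simp
    have pw: "p \<in> words B" using rd_words[OF r] by simp
    have A: "inH (p @ [(a, False)] @ winv q)" using e unfolding eqv_def by simp
    have "inH ((q @ [(a, True)]) @ (winv p @ p) @ [(a, False)] @ winv q)"
      using H_mul[OF H_inv[OF A] A] by simp
    moreover have "le ((q @ [(a, True)]) @ (winv p @ p) @ [(a, False)] @ winv q) ((q @ [(a, True)]) @ [(a, False)] @ winv q)"
      using le_drop[OF didem_dd[of "winv p"], of "q @ [(a, True)]" "[(a, False)] @ winv q"] pw qw T
      by (simp add: dd_def words_Cons)
    ultimately have "inH (q @ [(a, True)] @ [(a, False)] @ winv q)" using H_up by simp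
    then show ?thesis using x T unfolding rd_def by simp
  next
    case P
    then obtain k cX where cX: "cX \<in> cellsH k" "labC (fst cX) = a" "root DH k cX = (w', Vc q)" by blast
    obtain c p where cp: "cX = (c, Vc p)" "inC k c p" using cX(1) by (rule cellsH_E)
    have "root DH k cX = (root C k c, Vc p)" using root_H[OF cp(2)] cp by simp
    then have V: "Vc p = Vc q" using cX by simp
    have e: "eqv q p" using Vc_eq q cp(2) V unfolding inC_def by blast
    have c: "c \<in> dcells C k" "labC c = a" using cp cX unfolding inC_def by auto
    have k: "2 \<le> k" using dim_P[OF c(1)] c P by simp
    have "inH (p @ [(a, False)] @ winv p)" using cp(2) c k unfolding inC_def okc_def by simp
    then have "inH (q @ [(a, False)] @ winv q)" using H_conj[OF e] by blast
    then show ?thesis using P_facts(1)[OF P(1) qw] x by simp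
  qed
qed

lemma stepH_a:
  assumes q: "rd q" and w': "act B C labC u q = Some w'" and rx: "rd (q @ [x])"
    and w: "act B C labC u (q @ [x]) = Some w"
  shows "lcx.stepR B DH labH (w', Vc q) x (w, Vc (q @ [x]))"
proof -
  interpret DHL: lcx B DH labH using labeled_DH' .
  obtain a b where x: "x = (a, b)" by (cases x)
  have qw: "q \<in> words B" using rd_words[OF q] .
  have sC: "stepR w' x w" using w w' step_iff by (simp add: act_snoc)
  have aw: "a \<in> Xset B \<union> Pset B" using rd_words[OF rx] x by simp
  show ?thesis
  proof (cases "a \<in> Xset B")
    case True
    show ?thesis
    proof (cases b)
      case False
      obtain c where c: "c \<in> dcells C 1" "labC c = a" "dface C 1 c = w'" "dface C 0 c = w"
        using sC x True False XP_disj unfolding stepR_def by auto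
      have ic: "inC 1 c q" unfolding inC_def okc_def using c q w' rx x False by (simp add: root_def)
      have f1: "dfH 1 (c, Vc q) = (w', Vc q)" using face_in[OF ic, of 1] c by simp
      have f0: "dfH 0 (c, Vc q) = (w, Vc (q @ [x]))" using face_in[OF ic, of 0] c x False by simp
      have "(c, Vc q) \<in> cellsH 1" unfolding cellsH_def using ic by blast
      then show ?thesis unfolding DHL.stepR_def using x True False f1 f0 c by (auto simp: labH_apply)
    next
      case bT: True
      obtain c where c: "c \<in> dcells C 1" "labC c = a" "dface C 0 c = w'" "dface C 1 c = w"
        using sC x True bT XP_disj unfolding stepR_def by auto
      have m: "mcong B (q @ ([(a, True)] @ [(a, False)] @ [(a, True)]) @ [(a, False)] @ winv q)
                      (q @ [(a, True)] @ [(a, False)] @ winv q)"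
        using mc_ctx[OF mc_inv1[of "[(a, True)]"], of q "[(a, False)] @ winv q"] qw True by (simp add: words_Cons)
      have r2: "rd (q @ [x] @ [(a, False)])" using H_cong[OF _ mc_sym[OF m]] rx x bT unfolding rd_def by simp
      have ic: "inC 1 c (q @ [x])" unfolding inC_def okc_def using c rx w r2 x by (simp add: root_def)
      have f1: "dfH 1 (c, Vc (q @ [x])) = (w, Vc (q @ [x]))" using face_in[OF ic, of 1] c by simp
      have f0: "dfH 0 (c, Vc (q @ [x])) = (w', Vc (q @ [x] @ [(a, False)]))" using face_in[OF ic, of 0] c by simp
      have "eqv (q @ [x] @ [(a, False)]) q" using rx x bT unfolding eqv_def rd_def by simp
      then have "Vc (q @ [x] @ [(a, False)]) = Vc q" using Vc_eq r2 q by simp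
      moreover have "(c, Vc (q @ [x])) \<in> cellsH 1" unfolding cellsH_def using ic by blast
      ultimately show ?thesis unfolding DHL.stepR_def using x True bT f1 f0 c by (auto simp: labH_apply)
    qed
  next
    case False
    then have P: "a \<in> Pset B" using aw by simp
    obtain k c where c: "w = w'" "c \<in> dcells C k" "labC c = a" "root C k c = w'"
      using sC x False P unfolding stepR_def by auto
    have k: "2 \<le> k" using dim_P[OF c(2)] c P by simp
    have okH: "inH (q @ [(a, False)] @ winv q)" using P_facts(1)[OF P qw] rx x by simp
    have ic: "inC k c q" unfolding inC_def okc_def using c q w' okH k by simp
    have "eqv (q @ [x]) q" using P_facts(2)[OF P qw] okH x by simp
    then have V: "Vc (q @ [x]) = Vc q" using Vc_eq rx q by simp
    have "(c, Vc q) \<in> cellsH k" unfolding cellsH_def using ic by blast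
    moreover have "root DH k (c, Vc q) = (w', Vc q)" using root_H[OF ic] c by simp
    ultimately show ?thesis unfolding DHL.stepR_def using x P c V by (auto simp: labH_apply)
  qed
qed

lemma act_H: "p \<in> words B \<Longrightarrow> act B DH labH vH p =
   (if rd p then Some (the (act B C labC u p), Vc p) else None)"
proof (induction p rule: rev_induct)
  case Nil then show ?case using rd_Nil by (simp add: vH_def act_def)
next
  case (snoc x q)
  interpret DHL: lcx B DH labH using labeled_DH' .
  have qw: "q \<in> words B" using snoc.prems by simp
  show ?case
  proof (cases "rd q")
    case False
    then have "\<not> rd (q @ [x])" using rd_prefix by blast
    then show ?thesis using snoc.IH[OF qw] False by (subst DHL.act_snoc) simp
  next
    case True
    obtain w' where w': "act B C labC u q = Some w'" using rd_act[OF True] by blast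
    have IH: "act B DH labH vH q = Some (w', Vc q)" using snoc.IH[OF qw] True w' by simp
    show ?thesis
    proof (cases "rd (q @ [x])")
      case True2: True
      obtain w where w: "act B C labC u (q @ [x]) = Some w" using rd_act[OF True2] by blast
      have "DHL.stepR (w', Vc q) x (w, Vc (q @ [x]))" using stepH_a[OF True w' True2 w] .
      then have "step B DH labH (w', Vc q) x = Some (w, Vc (q @ [x]))" using DHL.step_iff by blast
      then show ?thesis using IH True2 w by (subst DHL.act_snoc) simp
    next
      case False
      have "step B DH labH (w', Vc q) x = None"
        using DHL.step_None_iff stepH_b[OF True w'] False by blast
      then show ?thesis using IH False by (subst DHL.act_snoc) simp
    qed
  qed
qed

lemma loop_H: "loopmon B DH labH vH = H"
proof -
  interpret DHL: lcx B DH labH using labeled_DH' .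
  have key: "\<And>p. p \<in> words B \<Longrightarrow> cls p \<in> loopmon B DH labH vH \<longleftrightarrow> inH p"
  proof -
    fix p assume p: "p \<in> words B"
    have "cls p \<in> loopmon B DH labH vH \<longleftrightarrow> act B DH labH vH p = Some vH"
      using DHL.loopmon_cls[OF p] .
    also have "\<dots> \<longleftrightarrow> rd p \<and> the (act B C labC u p) = u \<and> Vc p = Vc []"
      using act_H[OF p] by (simp add: vH_def)
    also have "\<dots> \<longleftrightarrow> inH p"
    proof
      assume a: "rd p \<and> the (act B C labC u p) = u \<and> Vc p = Vc []"
      then have "eqv p []" using Vc_eq rd_Nil by blast
      then show "inH p" unfolding eqv_def by simp
    next
      assume h: "inH p"
      then have e: "eqv p []" unfolding eqv_def by simp
      have r: "rd p" using eqv_rd[OF e] .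
      have "act B C labC u p = Some u" using eqv_act[OF e] by simp
      moreover have "Vc p = Vc []" using Vc_eq r rd_Nil e by blast
      ultimately show "rd p \<and> the (act B C labC u p) = u \<and> Vc p = Vc []" using r by simp
    qed
    finally show "cls p \<in> loopmon B DH labH vH \<longleftrightarrow> inH p" .
  qed
  show ?thesis
  proof
    show "loopmon B DH labH vH \<subseteq> H"
    proof
      fix m assume m: "m \<in> loopmon B DH labH vH"
      obtain p where "p \<in> words B" "m = cls p" using m by (rule DHL.loopmon_E)
      then show "m \<in> H" using key m by blast
    qed
  next
    show "H \<subseteq> loopmon B DH labH vH"
    proof
      fix m assume m: "m \<in> H"
      then have "m \<in> Mcar B" using closed_sub[OF Hc] by blast
      then obtain p where "p \<in> words B" "m = cls p" by (rule Mcar_E)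
      then show "m \<in> loopmon B DH labH vH" using key m by blast
    qed
  qed
qed

lemma conn_H: "dconnected DH"
proof -
  interpret DHL: lcx B DH labH using labeled_DH' .
  show ?thesis
  proof (rule DHL.conn_from[OF vH_cell], intro ballI)
    fix y assume y: "y \<in> dcells DH 0"
    then obtain c p where cp: "y = (c, Vc p)" "inC 0 c p" by (auto elim: cellsH_E)
    have "act B DH labH vH p = Some y"
      using act_H[OF rd_words] cp unfolding inC_def by simp
    then show "DHL.adj\<^sup>*\<^sup>* vH y" by (rule DHL.act_conn)
  qed
qed

lemma realizes_H: "realizes B C labC u H DH labH fst vH"
  unfolding realizes_def using labeled_DH conn_H lab_immersion_DH vH_cell loop_H
  by (simp add: vH_def labH_def)

end

theorem existence:
  fixes B :: "'l dcx" and C :: "'c dcx" and labC :: "'c \<Rightarrow> 'l"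
  assumes "is_base B" "labeled B C labC" "u \<in> dcells C 0"
    "closed_inv_submonoid B (Mcar B) H" "H \<subseteq> loopmon B C labC u"
  shows "\<exists>(DH :: ('c \<times> 'l word set set) dcx) labH fH v. realizes B C labC u H DH labH fH v"
proof -
  interpret E: exH B C labC u H
    using assms unfolding exH_def exH_axioms_def lcx_def lcx_axioms_def bse_def by blast
  show ?thesis using E.realizes_H by blast
qed


lemma inv_cmor:
  assumes iso: "dc_iso D1 D2 h" and d1: "dcomplex D1" and d2: "dcomplex D2"
  shows "cmor D2 D1 (inv_into (allcells D1) h)" "\<And>c. c \<in> allcells D1 \<Longrightarrow> inv_into (allcells D1) h (h c) = c"
    "\<And>c'. c' \<in> allcells D2 \<Longrightarrow> h (inv_into (allcells D1) h c') = c'"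
proof -
  let ?g = "inv_into (allcells D1) h"
  have bij: "bij_betw h (allcells D1) (allcells D2)" using iso unfolding dc_iso_def by blast
  have cm: "cmor D1 D2 h" using dc_iso_cmor[OF iso] .
  show gh: "\<And>c. c \<in> allcells D1 \<Longrightarrow> ?g (h c) = c" using bij bij_betw_inv_into_left by metis
  show hg: "\<And>c'. c' \<in> allcells D2 \<Longrightarrow> h (?g c') = c'" using bij bij_betw_inv_into_right by metis
  have pre: "\<And>c' k. c' \<in> dcells D2 k \<Longrightarrow> ?g c' \<in> dcells D1 k"
  proof -
    fix c' k assume c': "c' \<in> dcells D2 k"
    then have "c' \<in> allcells D2" unfolding allcells_def by blast
    then have g: "?g c' \<in> allcells D1" "h (?g c') = c'" using bij hg bij_betw_imp_surj_on inv_into_into by (metis, metis)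
    then obtain j where j: "?g c' \<in> dcells D1 j" unfolding allcells_def by blast
    have "h (?g c') \<in> dcells D2 j" using cmor_cell[OF cm j] .
    then have "j = k" using g(2) c' dc_disj[OF d2] by metis
    then show "?g c' \<in> dcells D1 k" using j by simp
  qed
  show "cmor D2 D1 ?g"
    unfolding cmor_def
  proof (intro conjI allI ballI impI)
    fix k c' assume "c' \<in> dcells D2 k" then show "?g c' \<in> dcells D1 k" using pre by blast
  next
    fix k c' i assume a: "c' \<in> dcells D2 k" "i \<le> k" "1 \<le> k"
    have gc: "?g c' \<in> dcells D1 k" using pre[OF a(1)] .
    have c'a: "c' \<in> allcells D2" using a(1) unfolding allcells_def by blast
    have "h (dface D1 i (?g c')) = dface D2 i (h (?g c'))" using cmor_face[OF cm gc a(2) a(3)] .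
    then have e: "h (dface D1 i (?g c')) = dface D2 i c'" using hg[OF c'a] by simp
    have "dface D1 i (?g c') \<in> allcells D1" using dc_face[OF d1 a(3) gc a(2)] unfolding allcells_def by blast
    then show "?g (dface D2 i c') = dface D1 i (?g c')" using gh e by metis
  qed
qed

lemma part3_fwd:
  fixes B :: "'l dcx" and C :: "'c dcx" and D1 :: "'d dcx" and D2 :: "'e dcx"
  assumes base: "is_base B" and lC: "labeled B C labC"
    and r1: "realizes B C labC u H D1 lab1 f1 v1" and r2: "realizes B C labC u K D2 lab2 f2 v2"
    and iso: "dc_iso D1 D2 h" and hf: "\<forall>k. \<forall>c\<in>dcells D1 k. f2 (h c) = f1 c"
  shows "conjugate B (loopmon B C labC u) H K"
proof -
  have R1: "labeled B D1 lab1" "dconnected D1" "lab_immersion D1 lab1 C labC f1" "v1 \<in> dcells D1 0" "f1 v1 = u"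
     "loopmon B D1 lab1 v1 = H" using r1 unfolding realizes_def by auto
  have R2: "labeled B D2 lab2" "dconnected D2" "lab_immersion D2 lab2 C labC f2" "v2 \<in> dcells D2 0" "f2 v2 = u"
     "loopmon B D2 lab2 v2 = K" using r2 unfolding realizes_def by auto
  interpret bse B using base by (simp add: bse_def)
  interpret L1: lcx B D1 lab1 using base R1 unfolding lcx_def lcx_axioms_def bse_def by blast
  interpret L2: lcx B D2 lab2 using base R2 unfolding lcx_def lcx_axioms_def bse_def by blast
  interpret CC: lcx B C labC using base lC unfolding lcx_def lcx_axioms_def bse_def by blast
  interpret M2: lmor B D2 lab2 C labC f2
    using base lC R2 immersion_cmor unfolding lmor_def lmor_axioms_def lcx_def lcx_axioms_def bse_def lab_immersion_def by metis
  have labh: "\<And>k c. c \<in> dcells D1 k \<Longrightarrow> lab2 (h c) = lab1 c"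
  proof -
    fix k c assume c: "c \<in> dcells D1 k"
    have "h c \<in> dcells D2 k" using cmor_cell[OF dc_iso_cmor[OF iso] c] .
    then show "lab2 (h c) = lab1 c" using R1(3) R2(3) hf c unfolding lab_immersion_def by metis
  qed
  let ?g = "inv_into (allcells D1) h"
  have gi: "cmor D2 D1 ?g" "\<And>c. c \<in> allcells D1 \<Longrightarrow> ?g (h c) = c" "\<And>c'. c' \<in> allcells D2 \<Longrightarrow> h (?g c') = c'"
    using inv_cmor[OF iso L1.dcC L2.dcC] by auto
  have labg: "\<And>k c'. c' \<in> dcells D2 k \<Longrightarrow> lab1 (?g c') = lab2 c'"
  proof -
    fix k c' assume c': "c' \<in> dcells D2 k"
    have g: "?g c' \<in> dcells D1 k" using cmor_cell[OF gi(1) c'] .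
    have "c' \<in> allcells D2" using c' unfolding allcells_def by blast
    then show "lab1 (?g c') = lab2 c'" using labh[OF g] gi(3) by simp
  qed
  interpret Mh: lmor B D1 lab1 D2 lab2 h
    using base R1 R2 dc_iso_cmor[OF iso] labh unfolding lmor_def lmor_axioms_def lcx_def lcx_axioms_def bse_def by blast
  interpret Mg: lmor B D2 lab2 D1 lab1 ?g
    using base R1 R2 gi(1) labg unfolding lmor_def lmor_axioms_def lcx_def lcx_axioms_def bse_def by blast
  define w where "w = h v1"
  have w: "w \<in> dcells D2 0" using cmor_cell[OF dc_iso_cmor[OF iso] R1(4)] w_def by simp
  have gw: "?g w = v1" using gi(2) R1(4) unfolding w_def allcells_def by blast
  have fw: "f2 w = u" using hf R1(4) R1(5) w_def by simp
  obtain p where p: "p \<in> words B" "act B D2 lab2 v2 p = Some w" using L2.connected_path[OF R2(2) R2(4) w] by blast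
  have pL: "cls p \<in> loopmon B C labC u"
    using M2.act_tr[OF p(2)] R2(5) fw CC.loopmon_cls[OF p(1)] by simp
  have c1: "\<forall>g\<in>H. mmul B (mmul B (cls p) g) (minv B (cls p)) \<in> K"
  proof
    fix g assume g: "g \<in> H"
    obtain s where s: "s \<in> words B" "g = cls s" "act B D1 lab1 v1 s = Some v1"
      using g R1(6) L1.loopmon_E by metis
    have "act B D2 lab2 w s = Some w" using Mh.act_tr[OF s(3)] w_def by simp
    then have "act B D2 lab2 v2 (p @ s @ winv p) = Some v2"
      using p(2) L2.act_winv[OF p(2)] by (simp add: L2.act_append)
    then have "cls (p @ s @ winv p) \<in> K" using L2.loopmon_cls[of "p @ s @ winv p" v2] R2(6) p(1) s(1) by simp
    then show "mmul B (mmul B (cls p) g) (minv B (cls p)) \<in> K"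
      using s p mmul_cls minv_cls by simp
  qed
  have c2: "\<forall>k\<in>K. mmul B (mmul B (minv B (cls p)) k) (cls p) \<in> H"
  proof
    fix k assume k: "k \<in> K"
    obtain t where t: "t \<in> words B" "k = cls t" "act B D2 lab2 v2 t = Some v2"
      using k R2(6) L2.loopmon_E by metis
    have "act B D2 lab2 w (winv p @ t @ p) = Some w"
      using p(2) L2.act_winv[OF p(2)] t(3) by (simp add: L2.act_append)
    then have "act B D1 lab1 v1 (winv p @ t @ p) = Some v1" using Mg.act_tr gw by fastforce
    then have "cls (winv p @ t @ p) \<in> H" using L1.loopmon_cls[of "winv p @ t @ p" v1] R1(6) p(1) t(1) by simp
    then show "mmul B (mmul B (minv B (cls p)) k) (cls p) \<in> H"
      using t p mmul_cls minv_cls by simp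
  qed
  show ?thesis unfolding conjugate_def using pL c1 c2 by blast
qed

lemma part3_bwd:
  fixes B :: "'l dcx" and C :: "'c dcx" and D1 :: "'d dcx" and D2 :: "'e dcx"
  assumes base: "is_base B" and lC: "labeled B C labC"
    and Hc: "closed_inv_submonoid B (Mcar B) H"
    and r1: "realizes B C labC u H D1 lab1 f1 v1" and r2: "realizes B C labC u K D2 lab2 f2 v2"
    and cj: "conjugate B (loopmon B C labC u) H K"
  shows "\<exists>h. dc_iso D1 D2 h \<and> (\<forall>k. \<forall>c\<in>dcells D1 k. f2 (h c) = f1 c)"
proof -
  have R1: "labeled B D1 lab1" "dconnected D1" "lab_immersion D1 lab1 C labC f1" "v1 \<in> dcells D1 0" "f1 v1 = u"
     "loopmon B D1 lab1 v1 = H" using r1 unfolding realizes_def by auto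
  have R2: "labeled B D2 lab2" "dconnected D2" "lab_immersion D2 lab2 C labC f2" "v2 \<in> dcells D2 0" "f2 v2 = u"
     "loopmon B D2 lab2 v2 = K" using r2 unfolding realizes_def by auto
  interpret bse B using base by (simp add: bse_def)
  interpret L2: lcx B D2 lab2 using base R2 unfolding lcx_def lcx_axioms_def bse_def by blast
  interpret CC: lcx B C labC using base lC unfolding lcx_def lcx_axioms_def bse_def by blast
  interpret M2: lmor B D2 lab2 C labC f2
    using base lC R2 immersion_cmor unfolding lmor_def lmor_axioms_def lcx_def lcx_axioms_def bse_def lab_immersion_def by metis
  obtain m where m: "m \<in> loopmon B C labC u" "\<forall>h\<in>H. mmul B (mmul B m h) (minv B m) \<in> K"
     "\<forall>k\<in>K. mmul B (mmul B (minv B m) k) m \<in> H" using cj unfolding conjugate_def by blast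
  obtain p where p: "p \<in> words B" "m = cls p" "act B C labC u p = Some u" using m(1) by (rule CC.loopmon_E)
  have conjH: "\<And>s. s \<in> words B \<Longrightarrow> cls s \<in> H \<Longrightarrow> act B D2 lab2 v2 (p @ s @ winv p) = Some v2"
  proof -
    fix s assume s: "s \<in> words B" "cls s \<in> H"
    have "mmul B (mmul B (cls p) (cls s)) (minv B (cls p)) \<in> K" using m(2) s p by blast
    then have "cls (p @ s @ winv p) \<in> K" using mmul_cls minv_cls p s by simp
    then show "act B D2 lab2 v2 (p @ s @ winv p) = Some v2" using L2.loopmon_cls[of "p @ s @ winv p" v2] R2(6) p s by simp
  qed
  have "act B D2 lab2 v2 (p @ [] @ winv p) = Some v2" using conjH[of "[]"] closed_one[OF Hc] by simp
  then obtain w where w: "act B D2 lab2 v2 p = Some w" using L2.act_prefix by fastforce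
  have wv: "w \<in> dcells D2 0" using L2.act_vertex[OF R2(4) w] .
  have fw: "f2 w = u" using M2.act_tr[OF w] R2(5) p(3) by simp
  have LW: "loopmon B D2 lab2 w = H"
  proof
    show "loopmon B D2 lab2 w \<subseteq> H"
    proof
      fix g assume g: "g \<in> loopmon B D2 lab2 w"
      obtain s where s: "s \<in> words B" "g = cls s" "act B D2 lab2 w s = Some w" using g by (rule L2.loopmon_E)
      have "act B D2 lab2 v2 (p @ s @ winv p) = Some v2" using w s(3) L2.act_winv[OF w] by (simp add: L2.act_append)
      then have "cls (p @ s @ winv p) \<in> K" using L2.loopmon_cls[of "p @ s @ winv p" v2] R2(6) p s by simp
      then have "mmul B (mmul B (minv B (cls p)) (cls (p @ s @ winv p))) (cls p) \<in> H" using m(3) p by blast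
      then have h: "cls (winv p @ p @ s @ winv p @ p) \<in> H" using mmul_cls minv_cls p s by simp
      have "le ((winv p @ p) @ (s @ winv p @ p)) (s @ winv p @ p)"
        using le_drop[OF bse.didem_dd[of B "winv p"], of "[]" "s @ winv p @ p"] base p s by (simp add: bse_def dd_def)
      moreover have "le (s @ (winv p @ p) @ []) (s @ [])"
        using le_drop[OF bse.didem_dd[of B "winv p"], of s "[]"] base p s by (simp add: bse_def dd_def)
      ultimately have "le (winv p @ p @ s @ winv p @ p) s" using bse.le_trans[of B] base by (simp add: bse_def)
      then show "g \<in> H" using closed_up[OF Hc h] Mcar_cls s by simp
    qed
  next
    show "H \<subseteq> loopmon B D2 lab2 w"
    proof
      fix g assume g: "g \<in> H"
      then have "g \<in> Mcar B" using closed_sub[OF Hc] by blast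
      then obtain s where s: "s \<in> words B" "g = cls s" by (rule Mcar_E)
      have a: "act B D2 lab2 v2 (p @ s @ winv p) = Some v2" using conjH s g by simp
      then obtain w2 where w2: "act B D2 lab2 w s = Some w2" "act B D2 lab2 w2 (winv p) = Some v2"
        using w by (auto simp: L2.act_append split: option.splits)
      have "act B D2 lab2 w (winv p) = Some v2" using L2.act_winv[OF w] .
      then have "w2 = w" using L2.act_inj w2(2) by blast
      then show "g \<in> loopmon B D2 lab2 w" using L2.loopmon_cls s w2 by simp
    qed
  qed
  have "\<exists>h. dc_iso D1 D2 h \<and> h v1 = w \<and> (\<forall>k. \<forall>c\<in>dcells D1 k. f2 (h c) = f1 c \<and> lab2 (h c) = lab1 c)"
    using uniq_iso[OF base lC R1(1) R2(1) R1(2) R2(2) R1(3) R2(3) R1(4) wv] R1(5) fw R1(6) LW by simp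
  then show ?thesis by blast
qed

theorem mainTheorem13:
  fixes B :: "'l dcx" and C :: "'c dcx" and labC :: "'c \<Rightarrow> 'l"
  assumes "is_base B" and "labeled B C labC" and "dconnected C"
  shows
   "(\<forall>(D :: 'd dcx) labD f v.
       labeled B D labD \<and> dconnected D \<and> lab_immersion D labD C labC f \<and> v \<in> dcells D 0 \<longrightarrow>
       loopmon B D labD v \<subseteq> loopmon B C labC (f v) \<and>
       closed_inv_submonoid B (loopmon B C labC (f v)) (loopmon B D labD v))
  \<and> (\<forall>u H. u \<in> dcells C 0 \<and> closed_inv_submonoid B (Mcar B) H \<and> H \<subseteq> loopmon B C labC u \<longrightarrow>
       (\<exists>(DH :: ('c \<times> 'l word set set) dcx) labH fH v.
          realizes B C labC u H DH labH fH v \<and>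
          (\<forall>(D' :: 'd dcx) lab' f' v'. realizes B C labC u H D' lab' f' v' \<longrightarrow>
             (\<exists>h. dc_iso DH D' h \<and> h v = v' \<and>
                  (\<forall>k. \<forall>c\<in>dcells DH k. f' (h c) = fH c \<and> lab' (h c) = labH c)))))
  \<and> (\<forall>u H K (D1 :: 'd dcx) lab1 f1 v1 (D2 :: 'e dcx) lab2 f2 v2.
       u \<in> dcells C 0 \<and>
       closed_inv_submonoid B (Mcar B) H \<and> H \<subseteq> loopmon B C labC u \<and>
       closed_inv_submonoid B (Mcar B) K \<and> K \<subseteq> loopmon B C labC u \<and>
       realizes B C labC u H D1 lab1 f1 v1 \<and> realizes B C labC u K D2 lab2 f2 v2 \<longrightarrow>
       ((\<exists>h. dc_iso D1 D2 h \<and> (\<forall>k. \<forall>c\<in>dcells D1 k. f2 (h c) = f1 c))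
        \<longleftrightarrow> conjugate B (loopmon B C labC u) H K))"
proof -
  note base = assms(1) and lC = assms(2)
  interpret bse B using base by (simp add: bse_def)
  interpret CC: lcx B C labC using base lC unfolding lcx_def lcx_axioms_def bse_def by blast
  have P1: "\<forall>(D :: 'd dcx) labD f v.
       labeled B D labD \<and> dconnected D \<and> lab_immersion D labD C labC f \<and> v \<in> dcells D 0 \<longrightarrow>
       loopmon B D labD v \<subseteq> loopmon B C labC (f v) \<and>
       closed_inv_submonoid B (loopmon B C labC (f v)) (loopmon B D labD v)"
  proof (intro allI impI)
    fix D :: "'d dcx" and labD f v
    assume a: "labeled B D labD \<and> dconnected D \<and> lab_immersion D labD C labC f \<and> v \<in> dcells D 0"
    interpret M: lmor B D labD C labC f
      using base lC a immersion_cmor unfolding lmor_def lmor_axioms_def lcx_def lcx_axioms_def bse_def lab_immersion_def by metis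
    show "loopmon B D labD v \<subseteq> loopmon B C labC (f v) \<and>
       closed_inv_submonoid B (loopmon B C labC (f v)) (loopmon B D labD v)"
      using M.loop_sub M.part1 by blast
  qed
  have P2: "\<forall>u H. u \<in> dcells C 0 \<and> closed_inv_submonoid B (Mcar B) H \<and> H \<subseteq> loopmon B C labC u \<longrightarrow>
       (\<exists>(DH :: ('c \<times> 'l word set set) dcx) labH fH v.
          realizes B C labC u H DH labH fH v \<and>
          (\<forall>(D' :: 'd dcx) lab' f' v'. realizes B C labC u H D' lab' f' v' \<longrightarrow>
             (\<exists>h. dc_iso DH D' h \<and> h v = v' \<and>
                  (\<forall>k. \<forall>c\<in>dcells DH k. f' (h c) = fH c \<and> lab' (h c) = labH c))))"
  proof (intro allI impI)
    fix u H assume a: "u \<in> dcells C 0 \<and> closed_inv_submonoid B (Mcar B) H \<and> H \<subseteq> loopmon B C labC u"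
    obtain DH :: "('c \<times> 'l word set set) dcx" and labH fH v where r: "realizes B C labC u H DH labH fH v"
      using existence[OF base lC] a by blast
    have U: "\<forall>(D' :: 'd dcx) lab' f' v'. realizes B C labC u H D' lab' f' v' \<longrightarrow>
             (\<exists>h. dc_iso DH D' h \<and> h v = v' \<and>
                  (\<forall>k. \<forall>c\<in>dcells DH k. f' (h c) = fH c \<and> lab' (h c) = labH c))"
    proof (intro allI impI)
      fix D' :: "'d dcx" and lab' f' v' assume r': "realizes B C labC u H D' lab' f' v'"
      show "\<exists>h. dc_iso DH D' h \<and> h v = v' \<and>
                  (\<forall>k. \<forall>c\<in>dcells DH k. f' (h c) = fH c \<and> lab' (h c) = labH c)"
      proof -
        have A: "labeled B DH labH" "dconnected DH" "lab_immersion DH labH C labC fH" "v \<in> dcells DH 0"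
          "fH v = u" "loopmon B DH labH v = H" using r unfolding realizes_def by auto
        have A': "labeled B D' lab'" "dconnected D'" "lab_immersion D' lab' C labC f'" "v' \<in> dcells D' 0"
          "f' v' = u" "loopmon B D' lab' v' = H" using r' unfolding realizes_def by auto
        show ?thesis using uniq_iso[OF base lC A(1) A'(1) A(2) A'(2) A(3) A'(3) A(4) A'(4)] A(5,6) A'(5,6) by simp
      qed
    qed
    show "\<exists>(DH :: ('c \<times> 'l word set set) dcx) labH fH v.
          realizes B C labC u H DH labH fH v \<and>
          (\<forall>(D' :: 'd dcx) lab' f' v'. realizes B C labC u H D' lab' f' v' \<longrightarrow>
             (\<exists>h. dc_iso DH D' h \<and> h v = v' \<and>
                  (\<forall>k. \<forall>c\<in>dcells DH k. f' (h c) = fH c \<and> lab' (h c) = labH c)))"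
      using r U by blast
  qed
  have P3: "\<forall>u H K (D1 :: 'd dcx) lab1 f1 v1 (D2 :: 'e dcx) lab2 f2 v2.
       u \<in> dcells C 0 \<and>
       closed_inv_submonoid B (Mcar B) H \<and> H \<subseteq> loopmon B C labC u \<and>
       closed_inv_submonoid B (Mcar B) K \<and> K \<subseteq> loopmon B C labC u \<and>
       realizes B C labC u H D1 lab1 f1 v1 \<and> realizes B C labC u K D2 lab2 f2 v2 \<longrightarrow>
       ((\<exists>h. dc_iso D1 D2 h \<and> (\<forall>k. \<forall>c\<in>dcells D1 k. f2 (h c) = f1 c))
        \<longleftrightarrow> conjugate B (loopmon B C labC u) H K)"
  proof (intro allI impI)
    fix u H K and D1 :: "'d dcx" and lab1 f1 v1 and D2 :: "'e dcx" and lab2 f2 v2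
    assume a: "u \<in> dcells C 0 \<and>
       closed_inv_submonoid B (Mcar B) H \<and> H \<subseteq> loopmon B C labC u \<and>
       closed_inv_submonoid B (Mcar B) K \<and> K \<subseteq> loopmon B C labC u \<and>
       realizes B C labC u H D1 lab1 f1 v1 \<and> realizes B C labC u K D2 lab2 f2 v2"
    have r1: "realizes B C labC u H D1 lab1 f1 v1" and r2: "realizes B C labC u K D2 lab2 f2 v2"
      and Hc: "closed_inv_submonoid B (Mcar B) H" using a by blast+
    show "(\<exists>h. dc_iso D1 D2 h \<and> (\<forall>k. \<forall>c\<in>dcells D1 k. f2 (h c) = f1 c))
        \<longleftrightarrow> conjugate B (loopmon B C labC u) H K"
    proof
      assume "\<exists>h. dc_iso D1 D2 h \<and> (\<forall>k. \<forall>c\<in>dcells D1 k. f2 (h c) = f1 c)"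
      then obtain h where h: "dc_iso D1 D2 h" "\<forall>k. \<forall>c\<in>dcells D1 k. f2 (h c) = f1 c" by blast
      show "conjugate B (loopmon B C labC u) H K" using part3_fwd[OF base lC r1 r2 h(1) h(2)] .
    next
      assume "conjugate B (loopmon B C labC u) H K"
      then show "\<exists>h. dc_iso D1 D2 h \<and> (\<forall>k. \<forall>c\<in>dcells D1 k. f2 (h c) = f1 c)"
        using part3_bwd[OF base lC Hc r1 r2] by blast
    qed
  qed
  show ?thesis using P1 P2 P3 by blast
qed


end
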